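(* Let $B$ be a finite Boolean lattice and $F$ a sheaf on $B$. Then $$\mathrm{HS}_*(B\setminus\mathbf{0};F)\cong\mathrm{HC}_*(B\setminus\mathbf{0};F).$$
   Context: $B$ is the lattice of all subsets of a finite set $A=\{a_1,\dots,a_n\}$ ordered by inclusion, with minimum $\mathbf{0}=\varnothing$; $B\setminus\mathbf{0}$ is $B$ with $\varnothing$ removed. A sheaf $F$ on a poset $P$ assigns an $R$-module $F(x)$ ($R$ commutative with $1$) to each $x\in P$ and a homomorphism $F^y_x:F(y)\to F(x)$ to each $x\le y$, functorially (contravariant functor); sheaves restrict to subposets. Sheaf homology $\mathrm{HS}_*(P;F)$ of a finite poset $P$ is the homology of the complex $S_n(P;F)=\bigoplus_\sigma F(x_0)$, sum over chains $\sigma=(x_n\le\cdots\le x_0)$ in $P$, with $d(s_\sigma)=F^{x_0}_{x_1}(s)_{d_0\sigma}+\sum_{i=1}^n(-1)^is_{d_i\sigma}$ ($s_\sigma$ is $s\in F(x_0)$ in the summand indexed by $\sigma$; $d_i\sigma$ omits $x_i$); equivalently the left derived functors of colimit. Cellular homology of $B\setminus\mathbf{0}$: $\mathrm{HC}_*(B\setminus\mathbf{0};F)$ is the homology of the complex with $C_k=\bigoplus_{|y|=k+1}F(y)$ (sum over subsets $y$ of size $k+1$) and differential $d=\sum\varepsilon^y_wF^y_w$ over pairs $w\subset y$ of nonempty subsets with $|w|=|y|-1$, where $\varepsilon^y_w=(-1)^{j-1}$ if $y=\{a_{i_1},\dots,a_{i_m}\}$ with $i_1<\cdots<i_m$ and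 $w=y\setminus\{a_{i_j}\}$. *)

theory Defs
  imports Main "HOL.Modules" "HOL-Library.Function_Algebras"
begin

text \<open>R-modules: the ring R is a type 'r::comm_ring_1; all modules F(x) are
  submodules (subspaces) of one ambient R-module 'm with scalar action s.\<close>

definition alt :: "nat \<Rightarrow> 'm::ab_group_add \<Rightarrow> 'm" where
  "alt i v = (if even i then v else - v)"

definition lin_on :: "('r::comm_ring_1 \<Rightarrow> 'm::ab_group_add \<Rightarrow> 'm) \<Rightarrow> ('r \<Rightarrow> 'n::ab_group_add \<Rightarrow> 'n)
    \<Rightarrow> 'm set \<Rightarrow> ('m \<Rightarrow> 'n) \<Rightarrow> bool" where
  "lin_on s t M f \<longleftrightarrow> (\<forall>u\<in>M. \<forall>v\<in>M. f (u + v) = f u + f v) \<and> (\<forall>r. \<forall>u\<in>M. f (s r u) = t r (f u))"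

definition is_sheaf :: "('r::comm_ring_1 \<Rightarrow> 'm::ab_group_add \<Rightarrow> 'm) \<Rightarrow> 'a set set
    \<Rightarrow> ('a set \<Rightarrow> 'm set) \<Rightarrow> ('a set \<Rightarrow> 'a set \<Rightarrow> 'm \<Rightarrow> 'm) \<Rightarrow> bool" where
  "is_sheaf s P F res \<longleftrightarrow>
     (\<forall>x\<in>P. 0 \<in> F x \<and> (\<forall>u\<in>F x. \<forall>v\<in>F x. u + v \<in> F x) \<and> (\<forall>r. \<forall>u\<in>F x. s r u \<in> F x)) \<and>
     (\<forall>x\<in>P. \<forall>y\<in>P. x \<subseteq> y \<longrightarrow> (\<forall>v\<in>F y. res y x v \<in> F x) \<and> lin_on s s (F y) (res y x)) \<and>
     (\<forall>x\<in>P. \<forall>v\<in>F x. res x x v = v) \<and>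
     (\<forall>x\<in>P. \<forall>y\<in>P. \<forall>z\<in>P. x \<subseteq> y \<longrightarrow> y \<subseteq> z \<longrightarrow> (\<forall>v\<in>F z. res y x (res z y v) = res z x v))"

text \<open>A complex is given by carriers C n (n \<ge> 0) and differentials d n : C n \<rightarrow> C (n-1),
  with d 0 = 0 (C (-1) = 0).\<close>
definition cycles :: "(nat \<Rightarrow> ('i \<Rightarrow> 'm::ab_group_add) set) \<Rightarrow> (nat \<Rightarrow> ('i \<Rightarrow> 'm) \<Rightarrow> ('i \<Rightarrow> 'm))
    \<Rightarrow> nat \<Rightarrow> ('i \<Rightarrow> 'm) set" where
  "cycles C d n = {c \<in> C n. n = 0 \<or> d n c = (\<lambda>_. 0)}"

definition boundaries :: "(nat \<Rightarrow> ('i \<Rightarrow> 'm::ab_group_add) set) \<Rightarrow> (nat \<Rightarrow> ('i \<Rightarrow> 'm) \<Rightarrow> ('i \<Rightarrow> 'm))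
    \<Rightarrow> nat \<Rightarrow> ('i \<Rightarrow> 'm) set" where
  "boundaries C d n = d (Suc n) ` C (Suc n)"

definition fscale :: "('r \<Rightarrow> 'm \<Rightarrow> 'm) \<Rightarrow> 'r \<Rightarrow> ('i \<Rightarrow> 'm) \<Rightarrow> ('i \<Rightarrow> 'm)" where
  "fscale s r c = (\<lambda>i. s r (c i))"

text \<open>Isomorphism of R-modules H_n(C) = Z_n(C)/B_n(C) \<cong> H_n(D) = Z_n(D)/B_n(D), written out:
  an R-linear map on cycles, preserving cycles and boundaries, whose induced map on
  the quotients is surjective and injective.\<close>
definition homology_iso ::
  "('r::comm_ring_1 \<Rightarrow> 'm::ab_group_add \<Rightarrow> 'm)
   \<Rightarrow> (nat \<Rightarrow> ('i \<Rightarrow> 'm) set) \<Rightarrow> (nat \<Rightarrow> ('i \<Rightarrow> 'm) \<Rightarrow> ('i \<Rightarrow> 'm))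
   \<Rightarrow> (nat \<Rightarrow> ('j \<Rightarrow> 'm) set) \<Rightarrow> (nat \<Rightarrow> ('j \<Rightarrow> 'm) \<Rightarrow> ('j \<Rightarrow> 'm)) \<Rightarrow> nat \<Rightarrow> bool" where
  "homology_iso s C d D e n \<longleftrightarrow>
     (\<exists>\<phi>. lin_on (fscale s) (fscale s) (cycles C d n) \<phi> \<and>
          \<phi> ` cycles C d n \<subseteq> cycles D e n \<and>
          \<phi> ` boundaries C d n \<subseteq> boundaries D e n \<and>
          (\<forall>z\<in>cycles D e n. \<exists>c\<in>cycles C d n. z - \<phi> c \<in> boundaries D e n) \<and>
          (\<forall>c\<in>cycles C d n. \<phi> c \<in> boundaries D e n \<longrightarrow> c \<in> boundaries C d n))"

text \<open>A chain \<sigma> = (x_n \<le> ... \<le> x_0) is the list [x_0, x_1, ..., x_n].\<close>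
definition pchains :: "'a set set \<Rightarrow> nat \<Rightarrow> 'a set list set" where
  "pchains P n = {\<sigma>. length \<sigma> = Suc n \<and> set \<sigma> \<subseteq> P \<and> (\<forall>i<n. \<sigma> ! Suc i \<subseteq> \<sigma> ! i)}"

definition face :: "nat \<Rightarrow> 'b list \<Rightarrow> 'b list" where
  "face i \<sigma> = take i \<sigma> @ drop (Suc i) \<sigma>"

definition S_car :: "'a set set \<Rightarrow> ('a set \<Rightarrow> 'm::ab_group_add set) \<Rightarrow> nat \<Rightarrow> ('a set list \<Rightarrow> 'm) set" where
  "S_car P F n = {c. \<forall>\<sigma>. (\<sigma> \<in> pchains P n \<longrightarrow> c \<sigma> \<in> F (hd \<sigma>)) \<and> (\<sigma> \<notin> pchains P n \<longrightarrow> c \<sigma> = 0)}"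

definition S_d :: "'a set set \<Rightarrow> ('a set \<Rightarrow> 'a set \<Rightarrow> 'm::ab_group_add \<Rightarrow> 'm) \<Rightarrow> nat
    \<Rightarrow> ('a set list \<Rightarrow> 'm) \<Rightarrow> ('a set list \<Rightarrow> 'm)" where
  "S_d P res n c = (\<lambda>\<tau>. if \<tau> \<in> pchains P (n - 1) then
      (\<Sum>\<sigma>\<in>pchains P n.
         (if face 0 \<sigma> = \<tau> then res (\<sigma> ! 0) (\<sigma> ! 1) (c \<sigma>) else 0)
         + (\<Sum>i\<in>{1..n}. if face i \<sigma> = \<tau> then alt i (c \<sigma>) else 0))
     else 0)"

definition cells :: "'a set \<Rightarrow> nat \<Rightarrow> 'a set set" where
  "cells A k = {y. y \<subseteq> A \<and> card y = Suc k}"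

definition C_car :: "'a set \<Rightarrow> ('a set \<Rightarrow> 'm::ab_group_add set) \<Rightarrow> nat \<Rightarrow> ('a set \<Rightarrow> 'm) set" where
  "C_car A F k = {c. \<forall>y. (y \<in> cells A k \<longrightarrow> c y \<in> F y) \<and> (y \<notin> cells A k \<longrightarrow> c y = 0)}"

text \<open>For y = w \<union> {a}, a \<notin> w: \<epsilon>^y_w = (-1)^(j-1), where a is the j-th element of y in the
  order of A; j - 1 = number of elements of w below a.\<close>
definition C_d :: "'a::linorder set \<Rightarrow> ('a set \<Rightarrow> 'a set \<Rightarrow> 'm::ab_group_add \<Rightarrow> 'm) \<Rightarrow> nat
    \<Rightarrow> ('a set \<Rightarrow> 'm) \<Rightarrow> ('a set \<Rightarrow> 'm)" where
  "C_d A res k c = (\<lambda>w. if w \<in> cells A (k - 1) then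
      (\<Sum>a\<in>A - w. alt (card {b\<in>w. b < a}) (res (insert a w) w (c (insert a w))))
     else 0)"

end

theory Submission
  imports Defs
begin

lemma face_length[simp]: "i < length xs \<Longrightarrow> length (face i xs) = length xs - 1"
  by (simp add: face_def)

lemma face_nth: "i < length xs \<Longrightarrow> k < length xs - 1 \<Longrightarrow>
   face i xs ! k = (if k < i then xs ! k else xs ! Suc k)"
  by (auto simp: face_def nth_append min_def)

lemma face_face: "i \<le> j \<Longrightarrow> Suc j < length xs \<Longrightarrow>
   face j (face i xs) = face i (face (Suc j) xs)"
  by (rule nth_equalityI) (auto simp: face_nth)

lemma face_map: "map f (face i xs) = face i (map f xs)"
  by (simp add: face_def take_map drop_map)

lemma face_Cons0[simp]: "face 0 (x # xs) = xs"
  by (simp add: face_def)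

lemma face_ConsSuc[simp]: "face (Suc i) (x # xs) = x # face i xs"
  by (simp add: face_def)

lemma face_set: "set (face i xs) \<subseteq> set xs"
  unfolding face_def by (auto dest: in_set_takeD in_set_dropD)

lemma sorted_wrt_face: "sorted_wrt R xs \<Longrightarrow> sorted_wrt R (face i xs)"
proof -
  assume a: "sorted_wrt R xs"
  have "xs = take i xs @ [xs ! i] @ drop (Suc i) xs" if "i < length xs"
    using that by (simp add: id_take_nth_drop)
  show ?thesis
  proof (cases "i < length xs")
    case True
    then have "sorted_wrt R (take i xs @ ([xs ! i] @ drop (Suc i) xs))"
      using a id_take_nth_drop by force
    then show ?thesis by (simp add: face_def sorted_wrt_append)
  next
    case False
    then show ?thesis using a by (simp add: face_def)
  qed
qed

lemma pchains_alt: "pchains P n = {\<sigma>. length \<sigma> = Suc n \<and> set \<sigma> \<subseteq> P \<and> sorted_wrt (\<lambda>x y. y \<subseteq> x) \<sigma>}"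
proof -
  have t: "transp (\<lambda>x y::'a set. y \<subseteq> x)" by (auto simp: transp_def)
  show ?thesis unfolding pchains_def
    by (auto simp: sorted_wrt_iff_nth_Suc_transp[OF t])
qed

lemma pchains_ne: "\<sigma> \<in> pchains P n \<Longrightarrow> \<sigma> \<noteq> []"
  by (auto simp: pchains_def)

lemma pchains_sub_hd: "\<sigma> \<in> pchains P n \<Longrightarrow> x \<in> set \<sigma> \<Longrightarrow> x \<subseteq> hd \<sigma>"
  by (cases \<sigma>) (auto simp: pchains_alt)

lemma pchains_hd_in: "\<sigma> \<in> pchains P n \<Longrightarrow> hd \<sigma> \<in> P"
  by (cases \<sigma>) (auto simp: pchains_alt)

lemma face_pchains: "\<sigma> \<in> pchains P (Suc n) \<Longrightarrow> i \<le> Suc n \<Longrightarrow> face i \<sigma> \<in> pchains P n"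
  unfolding pchains_alt using face_set sorted_wrt_face by fastforce

lemma Cons_pchains: "(x # \<tau> \<in> pchains P (Suc n)) \<longleftrightarrow> x \<in> P \<and> \<tau> \<in> pchains P n \<and> hd \<tau> \<subseteq> x"
proof
  assume "x # \<tau> \<in> pchains P (Suc n)"
  then show "x \<in> P \<and> \<tau> \<in> pchains P n \<and> hd \<tau> \<subseteq> x"
    by (cases \<tau>) (auto simp: pchains_alt)
next
  assume "x \<in> P \<and> \<tau> \<in> pchains P n \<and> hd \<tau> \<subseteq> x"
  then show "x # \<tau> \<in> pchains P (Suc n)"
    using pchains_sub_hd[of \<tau> P n] by (auto simp: pchains_alt)
qed

lemma pchains0: "pchains P 0 = (\<lambda>x. [x]) ` P"
  by (auto simp: pchains_def length_Suc_conv)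

lemma finite_pchains: "finite P \<Longrightarrow> finite (pchains P n)"
proof -
  assume "finite P"
  then have "finite {xs. set xs \<subseteq> P \<and> length xs = Suc n}"
    by (rule finite_lists_length_eq)
  moreover have "pchains P n \<subseteq> {xs. set xs \<subseteq> P \<and> length xs = Suc n}"
    by (auto simp: pchains_def)
  ultimately show ?thesis using finite_subset by blast
qed

lemma hd_face: "0 < i \<Longrightarrow> xs \<noteq> [] \<Longrightarrow> hd (face i xs) = hd xs"
  by (cases xs) (auto simp: face_def)

lemma hd_face_sub: "\<sigma> \<in> pchains P (Suc n) \<Longrightarrow> i \<le> Suc n \<Longrightarrow> hd (face i \<sigma>) \<subseteq> hd \<sigma>"
  using face_pchains[of \<sigma> P n i] face_set[of i \<sigma>] pchains_ne pchains_sub_hd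
  by (metis hd_in_set subset_code(1))

definition bdS :: "'a set list \<Rightarrow> 'a set list \<Rightarrow> int" where
  "bdS \<sigma> \<tau> = (\<Sum>i<length \<sigma>. if face i \<sigma> = \<tau> then (-1)^i else 0)"

definition dvec :: "'a set set \<Rightarrow> nat \<Rightarrow> ('a set list \<Rightarrow> int) \<Rightarrow> 'a set list \<Rightarrow> int" where
  "dvec P n T = (\<lambda>\<rho>. \<Sum>\<tau>\<in>pchains P n. T \<tau> * bdS \<tau> \<rho>)"

definition cone :: "'a set \<Rightarrow> ('a set list \<Rightarrow> int) \<Rightarrow> 'a set list \<Rightarrow> int" where
  "cone x T = (\<lambda>\<rho>. case \<rho> of [] \<Rightarrow> 0 | y # \<tau> \<Rightarrow> if y = x then T \<tau> else 0)"

lemma cone_Nil[simp]: "cone x T [] = 0" and cone_Cons[simp]: "cone x T (y # \<tau>) = (if y = x then T \<tau> else 0)"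
  by (auto simp: cone_def)

lemma bdS_nz: "bdS \<sigma> \<tau> \<noteq> 0 \<Longrightarrow> \<exists>i<length \<sigma>. face i \<sigma> = \<tau>"
  unfolding bdS_def by (rule ccontr) (auto intro!: sum.neutral)

lemma sum_if_mult: "(\<Sum>i\<in>I. if c i then a i else 0) * (b::int) = (\<Sum>i\<in>I. if c i then a i * b else 0)"
  by (simp add: sum_distrib_right) (rule sum.cong, auto)

lemma sum_bdS:
  assumes fin: "finite P" and \<sigma>: "\<sigma> \<in> pchains P (Suc n)"
  shows "(\<Sum>\<tau>\<in>pchains P n. bdS \<sigma> \<tau> * f \<tau>) = (\<Sum>i<Suc (Suc n). (-1)^i * f (face i \<sigma>))"
proof -
  have len: "length \<sigma> = Suc (Suc n)" using \<sigma> by (simp add: pchains_def)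
  have "(\<Sum>\<tau>\<in>pchains P n. bdS \<sigma> \<tau> * f \<tau>)
      = (\<Sum>\<tau>\<in>pchains P n. \<Sum>i<Suc (Suc n). (if face i \<sigma> = \<tau> then (-1)^i * f \<tau> else 0))"
    unfolding bdS_def len by (simp only: sum_if_mult)
  also have "\<dots> = (\<Sum>i<Suc (Suc n). \<Sum>\<tau>\<in>pchains P n. (if face i \<sigma> = \<tau> then (-1)^i * f \<tau> else 0))"
    by (rule sum.swap)
  also have "\<dots> = (\<Sum>i<Suc (Suc n). (-1)^i * f (face i \<sigma>))"
  proof (rule sum.cong[OF refl])
    fix i assume "i \<in> {..<Suc (Suc n)}"
    then have "face i \<sigma> \<in> pchains P n" using face_pchains[OF \<sigma>] by auto
    then show "(\<Sum>\<tau>\<in>pchains P n. (if face i \<sigma> = \<tau> then (-1)^i * f \<tau> else 0)) = (-1)^i * f (face i \<sigma>)"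
      using finite_pchains[OF fin] by (simp add: sum.delta)
  qed
  finally show ?thesis .
qed

lemma bdS_zero_out:
  assumes "\<sigma> \<in> pchains P (Suc n)" "\<tau> \<notin> pchains P n"
  shows "bdS \<sigma> \<tau> = 0"
proof (rule ccontr)
  assume "bdS \<sigma> \<tau> \<noteq> 0"
  then obtain i where "i < length \<sigma>" "face i \<sigma> = \<tau>" using bdS_nz by blast
  moreover have "length \<sigma> = Suc (Suc n)" using assms(1) by (simp add: pchains_def)
  ultimately have "\<tau> \<in> pchains P n" using face_pchains[OF assms(1), of i] by simp
  then show False using assms(2) by simp
qed

lemma dd_zero:
  assumes fin: "finite P" and \<sigma>: "\<sigma> \<in> pchains P (Suc (Suc n))"
  shows "(\<Sum>\<tau>\<in>pchains P (Suc n). bdS \<sigma> \<tau> * bdS \<tau> \<rho>) = 0"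
proof -
  define N where "N = Suc (Suc n)"
  have len: "length \<sigma> = Suc N" using \<sigma> by (simp add: pchains_def N_def)
  define g where "g = (\<lambda>(i,j). ((-1)^(i+j) :: int) * (if face j (face i \<sigma>) = \<rho> then 1 else 0))"
  have "(\<Sum>\<tau>\<in>pchains P (Suc n). bdS \<sigma> \<tau> * bdS \<tau> \<rho>) = (\<Sum>i<Suc N. (-1)^i * bdS (face i \<sigma>) \<rho>)"
    using sum_bdS[OF fin \<sigma>] N_def by simp
  also have "\<dots> = (\<Sum>i<Suc N. \<Sum>j<N. g (i,j))"
  proof (rule sum.cong[OF refl])
    fix i assume "i \<in> {..<Suc N}"
    then have "length (face i \<sigma>) = N" using len by simp
    then show "(-1)^i * bdS (face i \<sigma>) \<rho> = (\<Sum>j<N. g (i,j))"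
      unfolding bdS_def g_def by (simp add: sum_distrib_left power_add if_distrib cong: if_cong)
  qed
  also have "\<dots> = sum g ({..<Suc N} \<times> {..<N})"
    by (simp add: sum.cartesian_product)
  also have "\<dots> = sum g {p\<in>{..<Suc N} \<times> {..<N}. snd p < fst p} + sum g {p\<in>{..<Suc N} \<times> {..<N}. \<not> snd p < fst p}"
  proof -
    have "{..<Suc N} \<times> {..<N} = {p\<in>{..<Suc N} \<times> {..<N}. snd p < fst p} \<union> {p\<in>{..<Suc N} \<times> {..<N}. \<not> snd p < fst p}"
      by auto
    then show ?thesis by (metis (no_types, lifting) sum.union_disjoint finite_SigmaI finite_lessThan finite_subset
       disjoint_iff mem_Collect_eq Un_upper1 Un_upper2)
  qed
  also have "sum g {p\<in>{..<Suc N} \<times> {..<N}. \<not> snd p < fst p} = - sum g {p\<in>{..<Suc N} \<times> {..<N}. snd p < fst p}"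
  proof -
    let ?S1 = "{p\<in>{..<Suc N} \<times> {..<N}. snd p < fst p}"
    let ?S2 = "{p\<in>{..<Suc N} \<times> {..<N}. \<not> snd p < fst p}"
    have bij: "bij_betw (\<lambda>(i,j). (Suc j, i)) ?S2 ?S1"
      by (rule bij_betw_byWitness[where f'="\<lambda>(i,j). (j, i - 1)"]) auto
    have "sum g ?S1 = sum (g \<circ> (\<lambda>(i,j). (Suc j, i))) ?S2"
      using sum.reindex_bij_betw[OF bij, of g] by simp
    also have "\<dots> = sum (\<lambda>p. - g p) ?S2"
    proof (rule sum.cong[OF refl])
      fix p assume p: "p \<in> ?S2"
      obtain i j where ij: "p = (i,j)" by (cases p)
      have "i \<le> j" "Suc j < length \<sigma>" using p ij len by auto
      then have "face i (face (Suc j) \<sigma>) = face j (face i \<sigma>)" using face_face by metis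
      then show "(g \<circ> (\<lambda>(i,j). (Suc j, i))) p = - g p"
        unfolding g_def ij by (simp add: add.commute)
    qed
    also have "\<dots> = - sum g ?S2" by (simp add: sum_negf)
    finally show ?thesis by simp
  qed
  finally show ?thesis by simp
qed

lemma sum_cone:
  assumes fin: "finite P" and x: "x \<in> P" and U: "\<And>\<tau>. U \<tau> \<noteq> 0 \<Longrightarrow> \<tau> \<in> pchains P m \<and> hd \<tau> \<subseteq> x"
  shows "(\<Sum>\<tau>\<in>pchains P (Suc m). cone x U \<tau> * f \<tau>) = (\<Sum>\<tau>\<in>pchains P m. U \<tau> * f (x # \<tau>))"
proof -
  let ?Q = "{\<tau>\<in>pchains P m. hd \<tau> \<subseteq> x}"
  have finm: "finite (pchains P m)" "finite (pchains P (Suc m))" using finite_pchains[OF fin] by auto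
  have "(\<Sum>\<tau>\<in>pchains P m. U \<tau> * f (x # \<tau>)) = (\<Sum>\<tau>\<in>?Q. U \<tau> * f (x # \<tau>))"
    by (rule sum.mono_neutral_right) (use finm U in auto)
  also have "\<dots> = (\<Sum>\<tau>\<in>(Cons x) ` ?Q. cone x U \<tau> * f \<tau>)"
    by (subst sum.reindex) (auto simp: inj_on_def)
  also have "\<dots> = (\<Sum>\<tau>\<in>pchains P (Suc m). cone x U \<tau> * f \<tau>)"
  proof (rule sum.mono_neutral_left)
    show "finite (pchains P (Suc m))" using finm by simp
    show "(Cons x) ` ?Q \<subseteq> pchains P (Suc m)" using x by (auto simp: Cons_pchains)
    show "\<forall>i\<in>pchains P (Suc m) - (Cons x) ` ?Q. cone x U i * f i = 0"
    proof
      fix \<tau> assume \<tau>: "\<tau> \<in> pchains P (Suc m) - (Cons x) ` ?Q"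
      show "cone x U \<tau> * f \<tau> = 0"
      proof (cases \<tau>)
        case (Cons y \<tau>')
        then show ?thesis using \<tau> U[of \<tau>'] by (cases "y = x") auto
      qed simp
    qed
  qed
  finally show ?thesis by simp
qed

lemma bdS_Cons: "bdS (x # \<tau>) \<rho> = (if \<tau> = \<rho> then 1 else 0) - (\<Sum>i<length \<tau>. if x # face i \<tau> = \<rho> then (-1)^i else 0)"
proof -
  have "bdS (x#\<tau>) \<rho> = (if \<tau> = \<rho> then 1 else 0) + (\<Sum>i<length \<tau>. if x # face i \<tau> = \<rho> then (-1)^Suc i else 0)"
    unfolding bdS_def length_Cons sum.lessThan_Suc_shift by simp
  also have "(\<Sum>i<length \<tau>. if x # face i \<tau> = \<rho> then ((-1::int)^Suc i) else 0) = - (\<Sum>i<length \<tau>. if x # face i \<tau> = \<rho> then (-1)^i else 0)"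
    by (simp add: sum_negf[symmetric]) (rule sum.cong, auto)
  finally show ?thesis by simp
qed

lemma cone_lemma:
  assumes fin: "finite P" and x: "x \<in> P" and U: "\<And>\<tau>. U \<tau> \<noteq> 0 \<Longrightarrow> \<tau> \<in> pchains P m \<and> hd \<tau> \<subseteq> x"
  shows "dvec P (Suc m) (cone x U) \<rho> = U \<rho> - cone x (dvec P m U) \<rho>"
proof -
  have finm: "finite (pchains P m)" using finite_pchains[OF fin] by auto
  have "dvec P (Suc m) (cone x U) \<rho> = (\<Sum>\<tau>\<in>pchains P m. U \<tau> * bdS (x # \<tau>) \<rho>)"
    unfolding dvec_def by (rule sum_cone[OF fin x U])
  also have "\<dots> = (\<Sum>\<tau>\<in>pchains P m. U \<tau> * (if \<tau> = \<rho> then 1 else 0))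
      - (\<Sum>\<tau>\<in>pchains P m. U \<tau> * (\<Sum>i<length \<tau>. if x # face i \<tau> = \<rho> then (-1)^i else 0))"
    by (simp add: bdS_Cons right_diff_distrib sum_subtractf)
  also have "(\<Sum>\<tau>\<in>pchains P m. U \<tau> * (if \<tau> = \<rho> then 1 else 0)) = U \<rho>"
  proof (cases "\<rho> \<in> pchains P m")
    case True then show ?thesis using finm by (simp add: if_distrib sum.delta cong: if_cong)
  next
    case False
    then have "U \<rho> = 0" using U by blast
    then show ?thesis using False by (auto intro!: sum.neutral)
  qed
  also have "(\<Sum>\<tau>\<in>pchains P m. U \<tau> * (\<Sum>i<length \<tau>. if x # face i \<tau> = \<rho> then (-1)^i else 0))
      = cone x (dvec P m U) \<rho>"
  proof (cases \<rho>)
    case Nil then show ?thesis by simp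
  next
    case (Cons y \<rho>')
    show ?thesis
    proof (cases "y = x")
      case True
      then show ?thesis unfolding Cons dvec_def bdS_def by simp
    next
      case False
      then show ?thesis unfolding Cons by simp
    qed
  qed
  finally show ?thesis .
qed

definition bdC :: "'a::linorder set \<Rightarrow> 'a set \<Rightarrow> int" where
  "bdC y w = (if w \<subseteq> y \<and> card (y - w) = 1 then alt (card {b\<in>w. b < Min (y - w)}) 1 else 0)"

definition kpsi :: "'a::linorder set list \<Rightarrow> 'a set \<Rightarrow> int" where
  "kpsi \<sigma> y = (if sorted_wrt (<) (map Min \<sigma>) \<and> set (map Min \<sigma>) = y then 1 else 0)"

lemma alt_one: "alt i (1::int) = (-1)^i"
  by (simp add: alt_def)

lemma set_face_distinct: "distinct xs \<Longrightarrow> i < length xs \<Longrightarrow> set (face i xs) = set xs - {xs ! i}"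
proof -
  assume d: "distinct xs" and i: "i < length xs"
  have e: "xs = take i xs @ xs ! i # drop (Suc i) xs" using i by (simp add: id_take_nth_drop)
  have "distinct (take i xs @ xs ! i # drop (Suc i) xs)" using d e by metis
  then have "xs ! i \<notin> set (take i xs) \<union> set (drop (Suc i) xs)" by auto
  moreover have "set xs = set (take i xs) \<union> {xs ! i} \<union> set (drop (Suc i) xs)"
    using e by (metis Un_insert_right insert_is_Un list.simps(15) set_append sup_commute)
  ultimately show ?thesis unfolding face_def by auto
qed

lemma nonstrict_adj:
  fixes ms :: "'a::linorder list"
  assumes "sorted ms" "\<not> sorted_wrt (<) ms"
  shows "\<exists>j. Suc j < length ms \<and> ms ! j = ms ! Suc j"
proof (rule ccontr)
  assume "\<not> ?thesis"
  then have "\<forall>j. Suc j < length ms \<longrightarrow> ms ! j < ms ! Suc j"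
    using assms(1) by (metis le_neq_trans lessI sorted_iff_nth_mono_less)
  then have "sorted_wrt (<) ms"
    by (simp add: sorted_wrt_iff_nth_Suc_transp)
  then show False using assms(2) by simp
qed

lemma psi_list:
  fixes ms :: "'a::linorder list"
  assumes srt: "sorted ms" and len: "length ms = Suc (Suc n)"
  shows "(\<Sum>i<Suc (Suc n). (-1)^i * (if sorted_wrt (<) (face i ms) \<and> set (face i ms) = w then 1 else 0))
       = (if sorted_wrt (<) ms then bdC (set ms) w else (0::int))"
proof (cases "sorted_wrt (<) ms")
  case True
  note strict = True
  then have d: "distinct ms" by (simp add: strict_sorted_iff)
  have st: "sorted_wrt (<) (face i ms)" for i using True sorted_wrt_face by blast
  have sf: "i < length ms \<Longrightarrow> set (face i ms) = set ms - {ms ! i}" for i using set_face_distinct[OF d] by blast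
  show ?thesis
  proof (cases "\<exists>i0<length ms. w = set ms - {ms ! i0}")
    case True
    then obtain i0 where i0: "i0 < length ms" "w = set ms - {ms ! i0}" by blast
    have eq: "i < length ms \<Longrightarrow> (set ms - {ms ! i} = w) = (i = i0)" for i
    proof
      assume i: "i < length ms" and "set ms - {ms ! i} = w"
      then have "ms ! i = ms ! i0" using i0 nth_mem[OF i] nth_mem[OF i0(1)] by blast
      then show "i = i0" using d i i0(1) nth_eq_iff_index_eq by blast
    qed (use i0 in auto)
    have "(\<Sum>i<Suc (Suc n). (-1)^i * (if sorted_wrt (<) (face i ms) \<and> set (face i ms) = w then 1 else 0))
        = (\<Sum>i<Suc (Suc n). if i = i0 then (-1)^i else (0::int))"
      by (rule sum.cong[OF refl]) (use len st sf eq in auto)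
    also have "\<dots> = (-1)^i0" using i0 len by simp
    also have "\<dots> = bdC (set ms) w"
    proof -
      have sub: "w \<subseteq> set ms" and diff: "set ms - w = {ms ! i0}" using i0 by auto
      have "{b \<in> w. b < ms ! i0} = set (take i0 ms)"
      proof
        show "{b \<in> w. b < ms ! i0} \<subseteq> set (take i0 ms)"
        proof
          fix b assume b: "b \<in> {b \<in> w. b < ms ! i0}"
          then obtain j where j: "j < length ms" "b = ms ! j" using i0 by (auto simp: in_set_conv_nth)
          have "j < i0"
          proof (rule ccontr)
            assume "\<not> j < i0"
            then have "ms ! i0 \<le> ms ! j" using srt j by (simp add: sorted_iff_nth_mono)
            then show False using b j by auto
          qed
          then show "b \<in> set (take i0 ms)" using j by (auto simp: in_set_conv_nth)
        qed
      next
        show "set (take i0 ms) \<subseteq> {b \<in> w. b < ms ! i0}"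
        proof
          fix b assume "b \<in> set (take i0 ms)"
          then obtain j where j: "j < i0" "b = ms ! j" using i0 by (auto simp: in_set_conv_nth)
          then have "b < ms ! i0" using strict i0 by (simp add: sorted_wrt_nth_less)
          moreover have "b \<in> set ms" using j i0 by auto
          ultimately show "b \<in> {b \<in> w. b < ms ! i0}" using i0 by auto
        qed
      qed
      then have "card {b \<in> w. b < ms ! i0} = i0"
        using d i0 by (simp add: distinct_card)
      then show ?thesis unfolding bdC_def using sub diff by (simp add: alt_one)
    qed
    finally show ?thesis using strict by simp
  next
    case False
    have "(\<Sum>i<Suc (Suc n). (-1)^i * (if sorted_wrt (<) (face i ms) \<and> set (face i ms) = w then 1 else 0)) = (0::int)"
      by (rule sum.neutral) (use False len sf in auto)
    moreover have "bdC (set ms) w = 0"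
    proof (rule ccontr)
      assume "bdC (set ms) w \<noteq> 0"
      then have sub: "w \<subseteq> set ms" and c: "card (set ms - w) = 1" unfolding bdC_def by (auto split: if_splits)
      then obtain a where a: "set ms - w = {a}" by (meson card_1_singletonE)
      then obtain i where "i < length ms" "a = ms ! i" by (metis Diff_iff in_set_conv_nth insertI1)
      moreover have "w = set ms - {a}" using sub a by auto
      ultimately show False using False by blast
    qed
    ultimately show ?thesis using \<open>sorted_wrt (<) ms\<close> by simp
  qed
next
  case False
  obtain j where j: "Suc j < length ms" "ms ! j = ms ! Suc j" using nonstrict_adj[OF srt False] by blast
  have ns: "\<not> sorted_wrt (<) (face i ms)" if i: "i < length ms" "i \<noteq> j" "i \<noteq> Suc j" for i
  proof
    assume s: "sorted_wrt (<) (face i ms)"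
    have lf: "length (face i ms) = Suc n" using i len by simp
    show False
    proof (cases "i < j")
      case True
      have "face i ms ! (j - 1) = ms ! j" "face i ms ! j = ms ! Suc j"
        using True i j len by (auto simp: face_nth)
      moreover have "face i ms ! (j - 1) < face i ms ! j"
        by (rule sorted_wrt_nth_less[OF s]) (use True j len lf in auto)
      ultimately show False using j by simp
    next
      case False
      then have "Suc j < i" using i by auto
      have "face i ms ! j = ms ! j" "face i ms ! Suc j = ms ! Suc j"
        using \<open>Suc j < i\<close> i j len by (auto simp: face_nth)
      moreover have "face i ms ! j < face i ms ! Suc j"
        by (rule sorted_wrt_nth_less[OF s]) (use \<open>Suc j < i\<close> i lf len in auto)
      ultimately show False using j by simp
    qed
  qed
  have feq: "face j ms = face (Suc j) ms"
    by (rule nth_equalityI) (use j in \<open>auto simp: face_nth dest: less_antisym\<close>)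
  have "(\<Sum>i<Suc (Suc n). (-1)^i * (if sorted_wrt (<) (face i ms) \<and> set (face i ms) = w then 1 else 0))
     = (\<Sum>i\<in>{j, Suc j}. (-1)^i * (if sorted_wrt (<) (face i ms) \<and> set (face i ms) = w then 1 else (0::int)))"
    by (rule sum.mono_neutral_right) (use j len ns in auto)
  also have "\<dots> = 0" using feq by simp
  finally show ?thesis using False by simp
qed

locale finA =
  fixes A :: "'a::linorder set"
  assumes finA: "finite A"
begin

abbreviation "P \<equiv> Pow A - {{}}"

lemma finP: "finite P" using finA by simp

lemma finpch: "finite (pchains P n)" using finite_pchains[OF finP] .

lemma fincells: "finite (cells A n)"
  unfolding cells_def using finA by simp

lemma cells_P: "y \<in> cells A n \<Longrightarrow> y \<in> P"
  unfolding cells_def by auto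

lemma cells_fin: "y \<in> cells A n \<Longrightarrow> finite y"
  unfolding cells_def using finA finite_subset by blast

lemma P_Min: "x \<in> P \<Longrightarrow> Min x \<in> x"
  using finA by (auto intro: Min_in finite_subset)

lemma mins_sorted: "\<sigma> \<in> pchains P n \<Longrightarrow> sorted (map Min \<sigma>)"
proof -
  assume \<sigma>: "\<sigma> \<in> pchains P n"
  then have s: "sorted_wrt (\<lambda>x y. y \<subseteq> x) \<sigma>" and sP: "set \<sigma> \<subseteq> P" by (auto simp: pchains_alt)
  have "sorted_wrt (\<lambda>x y. Min x \<le> Min y) \<sigma>"
  proof (rule sorted_wrt_mono_rel[OF _ s])
    fix x y assume "x \<in> set \<sigma>" "y \<in> set \<sigma>" "y \<subseteq> x"
    then show "Min x \<le> Min y" using sP finA by (intro Min_antimono) (auto intro: finite_subset)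
  qed
  then show ?thesis by (simp add: sorted_wrt_map)
qed

lemma mins_in_A: "\<sigma> \<in> pchains P n \<Longrightarrow> set (map Min \<sigma>) \<subseteq> A"
  using P_Min by (auto simp: pchains_def)

lemma mins_sub_hd: "\<sigma> \<in> pchains P n \<Longrightarrow> set (map Min \<sigma>) \<subseteq> hd \<sigma>"
proof
  fix m assume \<sigma>: "\<sigma> \<in> pchains P n" and "m \<in> set (map Min \<sigma>)"
  then obtain x where x: "x \<in> set \<sigma>" "m = Min x" by auto
  then have "x \<in> P" using \<sigma> by (auto simp: pchains_def)
  then have "m \<in> x" using x P_Min by simp
  then show "m \<in> hd \<sigma>" using pchains_sub_hd[OF \<sigma> x(1)] by auto
qed

lemma strict_cells: "\<sigma> \<in> pchains P n \<Longrightarrow> sorted_wrt (<) (map Min \<sigma>) \<Longrightarrow> set (map Min \<sigma>) \<in> cells A n"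
proof -
  assume \<sigma>: "\<sigma> \<in> pchains P n" and s: "sorted_wrt (<) (map Min \<sigma>)"
  then have "distinct (map Min \<sigma>)" by (simp add: strict_sorted_iff)
  then have "card (set (map Min \<sigma>)) = Suc n" using \<sigma> distinct_card[of "map Min \<sigma>"] by (simp add: pchains_def)
  then show ?thesis using mins_in_A[OF \<sigma>] by (simp add: cells_def)
qed

lemma kpsi_sum_left:
  assumes \<sigma>: "\<sigma> \<in> pchains P n"
  shows "(\<Sum>y\<in>cells A n. kpsi \<sigma> y * g y) = (if sorted_wrt (<) (map Min \<sigma>) then g (set (map Min \<sigma>)) else 0)"
proof (cases "sorted_wrt (<) (map Min \<sigma>)")
  case True
  then show ?thesis using strict_cells[OF \<sigma> True] fincells
    by (simp add: kpsi_def if_distrib[of "\<lambda>x. x * g _"] sum.delta' cong: if_cong)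
next
  case False
  then show ?thesis by (simp add: kpsi_def)
qed

lemma psi_chain:
  assumes \<sigma>: "\<sigma> \<in> pchains P (Suc n)"
  shows "(\<Sum>y\<in>cells A (Suc n). kpsi \<sigma> y * bdC y w) = (\<Sum>\<tau>\<in>pchains P n. bdS \<sigma> \<tau> * kpsi \<tau> w)"
proof -
  have len: "length (map Min \<sigma>) = Suc (Suc n)" using \<sigma> by (simp add: pchains_def)
  have "(\<Sum>\<tau>\<in>pchains P n. bdS \<sigma> \<tau> * kpsi \<tau> w) = (\<Sum>i<Suc (Suc n). (-1)^i * kpsi (face i \<sigma>) w)"
    by (rule sum_bdS[OF finP \<sigma>])
  also have "\<dots> = (\<Sum>i<Suc (Suc n). (-1)^i * (if sorted_wrt (<) (face i (map Min \<sigma>)) \<and> set (face i (map Min \<sigma>)) = w then 1 else 0))"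
    by (simp add: kpsi_def face_map)
  also have "\<dots> = (if sorted_wrt (<) (map Min \<sigma>) then bdC (set (map Min \<sigma>)) w else 0)"
    by (rule psi_list[OF mins_sorted[OF \<sigma>] len])
  finally show ?thesis by (simp add: kpsi_sum_left[OF \<sigma>])
qed

end

lemma sum_assoc: "(\<Sum>j\<in>J. (\<Sum>i\<in>I. a i * b i j) * (c j :: int)) = (\<Sum>i\<in>I. a i * (\<Sum>j\<in>J. b i j * c j))"
  by (simp add: sum_distrib_right sum_distrib_left mult.assoc) (rule sum.swap)

lemma if_times0: "(if c then a else (0::int)) * b = (if c then a * b else 0)" by simp
lemma times_if0: "b * (if c then a else (0::int)) = (if c then b * a else 0)" by simp

lemma bdS_single: "bdS [z] \<rho> = (if \<rho> = [] then 1 else 0)"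
  by (auto simp: bdS_def face_def)

lemma Min_sorted_Cons: "sorted (x # xs) \<Longrightarrow> Min (set (x # xs)) = (x::'a::linorder)"
  by (rule Min_eqI) auto

primrec kphi :: "'a::linorder set \<Rightarrow> nat \<Rightarrow> 'a set \<Rightarrow> 'a set list \<Rightarrow> int" where
  "kphi A 0 y = (\<lambda>\<tau>. if \<tau> = [y] then 1 else 0)"
| "kphi A (Suc n) y = cone y (\<lambda>\<tau>. \<Sum>w\<in>cells A n. bdC y w * kphi A n w \<tau>)"

definition PPk :: "'a::linorder set \<Rightarrow> nat \<Rightarrow> 'a set list \<Rightarrow> 'a set list \<Rightarrow> int" where
  "PPk A n \<sigma> \<rho> = (\<Sum>y\<in>cells A n. kpsi \<sigma> y * kphi A n y \<rho>)"

primrec kK :: "'a::linorder set \<Rightarrow> nat \<Rightarrow> 'a set list \<Rightarrow> 'a set list \<Rightarrow> int" where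
  "kK A 0 \<sigma> = cone (hd \<sigma>) (\<lambda>\<rho>. (if \<sigma> = \<rho> then 1 else 0) - PPk A 0 \<sigma> \<rho>)"
| "kK A (Suc n) \<sigma> = cone (hd \<sigma>) (\<lambda>\<rho>. (if \<sigma> = \<rho> then 1 else 0) - PPk A (Suc n) \<sigma> \<rho>
       - (\<Sum>\<tau>\<in>pchains (Pow A - {{}}) n. bdS \<sigma> \<tau> * kK A n \<tau> \<rho>))"

context finA
begin

lemma exists_sigma:
  assumes y: "y \<in> cells A n"
  shows "\<exists>\<sigma>\<in>pchains P n. \<forall>y'. kpsi \<sigma> y' = (if y' = y then 1 else 0)"
proof -
  define ys where "ys = sorted_list_of_set y"
  have fy: "finite y" using cells_fin[OF y] .
  have sys: "set ys = y" "sorted_wrt (<) ys" "length ys = Suc n"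
    using fy y by (auto simp: ys_def cells_def)
  define \<sigma> where "\<sigma> = map (\<lambda>i. set (drop i ys)) [0..<Suc n]"
  have mins: "map Min \<sigma> = ys"
  proof (rule nth_equalityI)
    show "length (map Min \<sigma>) = length ys" using sys by (simp add: \<sigma>_def)
    fix i assume "i < length (map Min \<sigma>)"
    then have i: "i < length ys" using sys by (simp add: \<sigma>_def)
    have "drop i ys = ys ! i # drop (Suc i) ys" using i by (simp add: Cons_nth_drop_Suc)
    moreover have "sorted (drop i ys)" using sys(2) by (simp add: strict_sorted_imp_sorted sorted_wrt_drop)
    ultimately have "Min (set (drop i ys)) = ys ! i" by (metis Min_sorted_Cons)
    then show "map Min \<sigma> ! i = ys ! i" using i sys by (simp add: \<sigma>_def del: upt_Suc)
  qed
  have "\<sigma> \<in> pchains P n"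
  proof -
    have "length \<sigma> = Suc n" by (simp add: \<sigma>_def)
    moreover have "set \<sigma> \<subseteq> P"
    proof
      fix x assume "x \<in> set \<sigma>"
      then obtain i where i: "i < Suc n" "x = set (drop i ys)" by (auto simp: \<sigma>_def simp del: upt_Suc)
      then have "x \<noteq> {}" using sys by simp
      moreover have "x \<subseteq> A" using i sys y by (auto simp: cells_def dest: in_set_dropD)
      ultimately show "x \<in> P" by simp
    qed
    moreover have "\<forall>i<n. \<sigma> ! Suc i \<subseteq> \<sigma> ! i"
    proof (intro allI impI)
      fix i assume "i < n"
      then have "\<sigma> ! Suc i = set (drop (Suc i) ys)" "\<sigma> ! i = set (drop i ys)"
        by (simp_all add: \<sigma>_def del: upt_Suc)
      then show "\<sigma> ! Suc i \<subseteq> \<sigma> ! i" by (simp add: set_drop_subset_set_drop)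
    qed
    ultimately show ?thesis by (simp add: pchains_def)
  qed
  moreover have "\<forall>y'. kpsi \<sigma> y' = (if y' = y then 1 else 0)"
    using mins sys by (auto simp: kpsi_def)
  ultimately show ?thesis by blast
qed

lemma dC2:
  assumes y: "y \<in> cells A (Suc (Suc m))"
  shows "(\<Sum>w\<in>cells A (Suc m). bdC y w * bdC w w') = 0"
proof -
  obtain \<sigma> where \<sigma>: "\<sigma> \<in> pchains P (Suc (Suc m))" and k: "\<forall>y'. kpsi \<sigma> y' = (if y' = y then 1 else 0)"
    using exists_sigma[OF y] by blast
  have "\<And>w. bdC y w = (\<Sum>y''\<in>cells A (Suc (Suc m)). kpsi \<sigma> y'' * bdC y'' w)"
    using k y fincells by (simp add: if_distrib[of "\<lambda>x. x * _"] sum.delta' cong: if_cong)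
  then have "(\<Sum>w\<in>cells A (Suc m). bdC y w * bdC w w')
     = (\<Sum>w\<in>cells A (Suc m). (\<Sum>\<tau>\<in>pchains P (Suc m). bdS \<sigma> \<tau> * kpsi \<tau> w) * bdC w w')"
    using psi_chain[OF \<sigma>] by simp
  also have "\<dots> = (\<Sum>\<tau>\<in>pchains P (Suc m). bdS \<sigma> \<tau> * (\<Sum>w\<in>cells A (Suc m). kpsi \<tau> w * bdC w w'))"
    by (rule sum_assoc)
  also have "\<dots> = (\<Sum>\<tau>\<in>pchains P (Suc m). bdS \<sigma> \<tau> * (\<Sum>\<tau>'\<in>pchains P m. bdS \<tau> \<tau>' * kpsi \<tau>' w'))"
    by (rule sum.cong[OF refl]) (simp add: psi_chain)
  also have "\<dots> = (\<Sum>\<tau>'\<in>pchains P m. (\<Sum>\<tau>\<in>pchains P (Suc m). bdS \<sigma> \<tau> * bdS \<tau> \<tau>') * kpsi \<tau>' w')"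
    by (rule sum_assoc[symmetric])
  also have "\<dots> = 0" using dd_zero[OF finP \<sigma>] by simp
  finally show ?thesis .
qed

lemma kpsi_sum_one: "\<tau> \<in> pchains P 0 \<Longrightarrow> (\<Sum>w\<in>cells A 0. kpsi \<tau> w) = 1"
  using kpsi_sum_left[of \<tau> 0 "\<lambda>_. 1"] by (auto simp: pchains0)

lemma dC1:
  assumes y: "y \<in> cells A 1"
  shows "(\<Sum>w\<in>cells A 0. bdC y w) = 0"
proof -
  obtain \<sigma> where \<sigma>: "\<sigma> \<in> pchains P (Suc 0)" and k: "\<forall>y'. kpsi \<sigma> y' = (if y' = y then 1 else 0)"
    using exists_sigma[OF y] by auto
  have "\<And>w. bdC y w = (\<Sum>y''\<in>cells A (Suc 0). kpsi \<sigma> y'' * bdC y'' w)"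
    using k y fincells by (simp add: if_distrib[of "\<lambda>x. x * _"] sum.delta' cong: if_cong)
  then have "(\<Sum>w\<in>cells A 0. bdC y w) = (\<Sum>w\<in>cells A 0. (\<Sum>\<tau>\<in>pchains P 0. bdS \<sigma> \<tau> * kpsi \<tau> w) * 1)"
    using psi_chain[OF \<sigma>] by simp
  also have "\<dots> = (\<Sum>\<tau>\<in>pchains P 0. bdS \<sigma> \<tau> * (\<Sum>w\<in>cells A 0. kpsi \<tau> w * 1))"
    by (rule sum_assoc)
  also have "\<dots> = (\<Sum>\<tau>\<in>pchains P 0. bdS \<sigma> \<tau> * 1)"
    by (rule sum.cong[OF refl]) (simp add: kpsi_sum_one)
  also have "\<dots> = (\<Sum>i<Suc (Suc 0). (-1)^i * 1)"
    by (rule sum_bdS[OF finP \<sigma>])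
  also have "\<dots> = 0" by simp
  finally show ?thesis .
qed

lemma bdC_sub: "bdC y w \<noteq> 0 \<Longrightarrow> w \<subseteq> y"
  by (auto simp: bdC_def split: if_splits)

lemma cone_supp:
  assumes x: "x \<in> P" and U: "\<And>\<tau>. U \<tau> \<noteq> 0 \<Longrightarrow> \<tau> \<in> pchains P m \<and> hd \<tau> \<subseteq> x"
    and nz: "cone x U \<rho> \<noteq> 0"
  shows "\<rho> \<in> pchains P (Suc m) \<and> hd \<rho> = x"
proof (cases \<rho>)
  case Nil then show ?thesis using nz by simp
next
  case (Cons y \<rho>')
  then have "y = x" "U \<rho>' \<noteq> 0" using nz by (auto split: if_splits)
  then show ?thesis using U[of \<rho>'] x Cons by (simp add: Cons_pchains)
qed

lemma kphi_supp: "y \<in> cells A n \<Longrightarrow> kphi A n y \<tau> \<noteq> 0 \<Longrightarrow> \<tau> \<in> pchains P n \<and> hd \<tau> = y"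
proof (induction n arbitrary: y \<tau>)
  case 0
  then show ?case using cells_P by (auto simp: pchains0 split: if_splits)
next
  case (Suc n)
  show ?case
  proof (rule cone_supp[where U="\<lambda>\<tau>. \<Sum>w\<in>cells A n. bdC y w * kphi A n w \<tau>"])
    show "y \<in> P" using cells_P[OF Suc.prems(1)] .
    show "cone y (\<lambda>\<tau>. \<Sum>w\<in>cells A n. bdC y w * kphi A n w \<tau>) \<tau> \<noteq> 0" using Suc.prems(2) by simp
    fix \<tau>' assume "(\<Sum>w\<in>cells A n. bdC y w * kphi A n w \<tau>') \<noteq> 0"
    then obtain w where w: "w \<in> cells A n" "bdC y w \<noteq> 0" "kphi A n w \<tau>' \<noteq> 0"
      by (metis (mono_tags, lifting) mult_eq_0_iff sum.neutral)
    then show "\<tau>' \<in> pchains P n \<and> hd \<tau>' \<subseteq> y" using Suc.IH[OF w(1) w(3)] bdC_sub[OF w(2)] by simp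
  qed
qed

lemma dvec_kphi0: "w \<in> cells A 0 \<Longrightarrow> dvec P 0 (kphi A 0 w) \<rho> = (if \<rho> = [] then 1 else 0)"
proof -
  assume "w \<in> cells A 0"
  then have "[w] \<in> pchains P 0" using cells_P[of w 0] by (simp add: pchains_def)
  then show ?thesis using finpch by (simp add: dvec_def if_times0 sum.delta' bdS_single)
qed

lemma phi_chain:
  "y \<in> cells A (Suc n) \<Longrightarrow> dvec P (Suc n) (kphi A (Suc n) y) \<rho> = (\<Sum>w\<in>cells A n. bdC y w * kphi A n w \<rho>)"
proof (induction n arbitrary: y \<rho>)
  case (0 y \<rho>)
  define T where "T = (\<lambda>\<tau>. \<Sum>w\<in>cells A 0. bdC y w * kphi A 0 w \<tau>)"
  have U: "T \<tau> \<noteq> 0 \<Longrightarrow> \<tau> \<in> pchains P 0 \<and> hd \<tau> \<subseteq> y" for \<tau>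
  proof -
    assume "T \<tau> \<noteq> 0"
    then obtain w where w: "w \<in> cells A 0" "bdC y w \<noteq> 0" "kphi A 0 w \<tau> \<noteq> 0"
      unfolding T_def by (metis (mono_tags, lifting) mult_eq_0_iff sum.neutral)
    then show ?thesis using kphi_supp[OF w(1) w(3)] bdC_sub[OF w(2)] by simp
  qed
  have d0: "dvec P 0 T \<rho>' = 0" for \<rho>'
  proof -
    have "dvec P 0 T \<rho>' = (\<Sum>w\<in>cells A 0. bdC y w * dvec P 0 (kphi A 0 w) \<rho>')"
      unfolding dvec_def T_def by (rule sum_assoc)
    also have "\<dots> = (\<Sum>w\<in>cells A 0. bdC y w) * (if \<rho>' = [] then 1 else 0)"
      by (simp only: sum_distrib_right, rule sum.cong[OF refl], subst dvec_kphi0) auto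
    also have "\<dots> = 0" using dC1 0 by simp
    finally show ?thesis .
  qed
  have "dvec P (Suc 0) (cone y T) \<rho> = T \<rho> - cone y (dvec P 0 T) \<rho>"
    by (rule cone_lemma[OF finP cells_P[OF 0] U])
  also have "cone y (dvec P 0 T) \<rho> = 0" using d0 by (cases \<rho>) auto
  finally show ?case by (simp add: T_def)
next
  case (Suc m y \<rho>)
  define T where "T = (\<lambda>\<tau>. \<Sum>w\<in>cells A (Suc m). bdC y w * kphi A (Suc m) w \<tau>)"
  have U: "T \<tau> \<noteq> 0 \<Longrightarrow> \<tau> \<in> pchains P (Suc m) \<and> hd \<tau> \<subseteq> y" for \<tau>
  proof -
    assume "T \<tau> \<noteq> 0"
    then obtain w where w: "w \<in> cells A (Suc m)" "bdC y w \<noteq> 0" "kphi A (Suc m) w \<tau> \<noteq> 0"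
      unfolding T_def by (metis (mono_tags, lifting) mult_eq_0_iff sum.neutral)
    then show ?thesis using kphi_supp[OF w(1) w(3)] bdC_sub[OF w(2)] by simp
  qed
  have d0: "dvec P (Suc m) T \<rho>' = 0" for \<rho>'
  proof -
    have "dvec P (Suc m) T \<rho>' = (\<Sum>w\<in>cells A (Suc m). bdC y w * dvec P (Suc m) (kphi A (Suc m) w) \<rho>')"
      unfolding dvec_def T_def by (rule sum_assoc)
    also have "\<dots> = (\<Sum>w\<in>cells A (Suc m). bdC y w * (\<Sum>w'\<in>cells A m. bdC w w' * kphi A m w' \<rho>'))"
    proof (rule sum.cong[OF refl])
      fix w assume "w \<in> cells A (Suc m)"
      then show "bdC y w * dvec P (Suc m) (kphi A (Suc m) w) \<rho>' = bdC y w * (\<Sum>w'\<in>cells A m. bdC w w' * kphi A m w' \<rho>')"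
        using Suc.IH[of w \<rho>'] by (simp only:)
    qed
    also have "\<dots> = (\<Sum>w'\<in>cells A m. (\<Sum>w\<in>cells A (Suc m). bdC y w * bdC w w') * kphi A m w' \<rho>')"
      by (rule sum_assoc[symmetric])
    also have "\<dots> = 0" using dC2[OF Suc.prems] by simp
    finally show ?thesis .
  qed
  have "dvec P (Suc (Suc m)) (cone y T) \<rho> = T \<rho> - cone y (dvec P (Suc m) T) \<rho>"
    by (rule cone_lemma[OF finP cells_P[OF Suc.prems] U])
  also have "cone y (dvec P (Suc m) T) \<rho> = 0" using d0 by (cases \<rho>) auto
  finally show ?case by (simp add: T_def)
qed

end

definition Rk :: "'a::linorder set \<Rightarrow> nat \<Rightarrow> 'a set list \<Rightarrow> 'a set list \<Rightarrow> int" where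
  "Rk A n \<tau> \<rho> = (case n of 0 \<Rightarrow> 0 | Suc m \<Rightarrow> (\<Sum>\<tau>'\<in>pchains (Pow A - {{}}) m. bdS \<tau> \<tau>' * kK A m \<tau>' \<rho>))"

context finA
begin

lemma psiphi:
  "y \<in> cells A n \<Longrightarrow> y' \<in> cells A n \<Longrightarrow> (\<Sum>\<tau>\<in>pchains P n. kphi A n y \<tau> * kpsi \<tau> y') = (if y = y' then 1 else 0)"
proof (induction n arbitrary: y y')
  case (0 y y')
  have "[y] \<in> pchains P 0" using cells_P[OF 0(1)] by (simp add: pchains_def)
  then have "(\<Sum>\<tau>\<in>pchains P 0. kphi A 0 y \<tau> * kpsi \<tau> y') = kpsi [y] y'"
    using finpch by (simp add: if_times0 sum.delta')
  moreover obtain a where "y = {a}" using 0(1) by (auto simp: cells_def card_Suc_eq)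
  ultimately show ?case by (auto simp: kpsi_def)
next
  case (Suc n y y')
  define T where "T = (\<lambda>\<tau>. \<Sum>w\<in>cells A n. bdC y w * kphi A n w \<tau>)"
  have yP: "y \<in> P" using cells_P[OF Suc.prems(1)] .
  have U: "T \<tau> \<noteq> 0 \<Longrightarrow> \<tau> \<in> pchains P n \<and> hd \<tau> \<subseteq> y" for \<tau>
  proof -
    assume "T \<tau> \<noteq> 0"
    then obtain w where w: "w \<in> cells A n" "bdC y w \<noteq> 0" "kphi A n w \<tau> \<noteq> 0"
      unfolding T_def by (metis (mono_tags, lifting) mult_eq_0_iff sum.neutral)
    then show ?thesis using kphi_supp[OF w(1) w(3)] bdC_sub[OF w(2)] by simp
  qed
  define X where "X = (\<lambda>w. \<Sum>\<tau>'\<in>pchains P n. kphi A n w \<tau>' * kpsi (y # \<tau>') y')"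
  have "(\<Sum>\<tau>\<in>pchains P (Suc n). kphi A (Suc n) y \<tau> * kpsi \<tau> y') = (\<Sum>\<tau>'\<in>pchains P n. T \<tau>' * kpsi (y # \<tau>') y')"
    unfolding kphi.simps T_def[symmetric] by (rule sum_cone[OF finP yP U])
  also have "\<dots> = (\<Sum>w\<in>cells A n. bdC y w * X w)"
    unfolding T_def X_def by (rule sum_assoc)
  finally have eq1: "(\<Sum>\<tau>\<in>pchains P (Suc n). kphi A (Suc n) y \<tau> * kpsi \<tau> y') = (\<Sum>w\<in>cells A n. bdC y w * X w)" .
  have fy: "finite y" using cells_fin[OF Suc.prems(1)] .
  have cy: "card y = Suc (Suc n)" "y \<subseteq> A" using Suc.prems(1) by (auto simp: cells_def)
  define m where "m = Min y"
  have my: "m \<in> y" using P_Min[OF yP] m_def by simp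
  have mle: "\<And>b. b \<in> y \<Longrightarrow> m \<le> b" using fy m_def by simp
  define w0 where "w0 = y - {m}"
  have w0c: "w0 \<in> cells A n" using cy my fy by (auto simp: w0_def cells_def)
  have Z: "bdC y w * X w = 0" if w: "w \<in> cells A n" "w \<noteq> w0" for w
  proof (cases "bdC y w = 0")
    case False
    then have wy: "w \<subseteq> y" using bdC_sub by blast
    have mw: "m \<in> w"
    proof (rule ccontr)
      assume "m \<notin> w"
      then have "w \<subseteq> w0" using wy by (auto simp: w0_def)
      moreover have "card w = card w0" using w(1) w0c by (simp add: cells_def)
      moreover have "finite w0" using fy by (simp add: w0_def)
      ultimately show False using w(2) card_subset_eq by blast
    qed
    have "X w = 0" unfolding X_def
    proof (rule sum.neutral, rule ballI)
      fix \<tau>' assume "\<tau>' \<in> pchains P n"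
      show "kphi A n w \<tau>' * kpsi (y # \<tau>') y' = 0"
      proof (cases "kphi A n w \<tau>' = 0")
        case False
        then have h: "\<tau>' \<in> pchains P n" "hd \<tau>' = w" using kphi_supp[OF w(1)] by auto
        then obtain z r where zr: "\<tau>' = z # r" by (cases \<tau>') (auto simp: pchains_def)
        have "Min w = m"
        proof (rule Min_eqI)
          show "finite w" using cells_fin[OF w(1)] .
        qed (use mw wy mle in auto)
        then have ns: "\<not> sorted_wrt (<) (map Min (y # \<tau>'))" using zr h m_def by simp
        have "kpsi (y # \<tau>') y' = 0" unfolding kpsi_def by (rule if_not_P) (use ns in blast)
        then show ?thesis by simp
      qed simp
    qed
    then show ?thesis by simp
  qed simp
  have "(\<Sum>w\<in>cells A n - {w0}. bdC y w * X w) = 0" by (rule sum.neutral) (use Z in blast)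
  then have "(\<Sum>w\<in>cells A n. bdC y w * X w) = bdC y w0 * X w0"
    using w0c fincells by (simp add: sum.remove)
  also have "bdC y w0 = 1"
  proof -
    have "y - w0 = {m}" using my by (auto simp: w0_def)
    moreover have "{b \<in> w0. b < m} = {}" using mle by (force simp: w0_def)
    moreover have "w0 \<subseteq> y" by (auto simp: w0_def)
    ultimately have e: "{b \<in> w0. b < Min (y - w0)} = {}" and f: "w0 \<subseteq> y \<and> card (y - w0) = 1" by simp_all
    show ?thesis unfolding bdC_def e using f by (simp add: alt_def)
  qed
  also have "X w0 = (if y = y' then 1 else 0)"
  proof -
    have tm: "kphi A n w0 \<tau>' * kpsi (y # \<tau>') y' = kphi A n w0 \<tau>' * (if m \<in> y' then kpsi \<tau>' (y' - {m}) else 0)"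
      if "\<tau>' \<in> pchains P n" for \<tau>'
    proof (cases "kphi A n w0 \<tau>' = 0")
      case False
      then have h: "\<tau>' \<in> pchains P n" "hd \<tau>' = w0" using kphi_supp[OF w0c] by auto
      have sub: "set (map Min \<tau>') \<subseteq> w0" using mins_sub_hd[OF h(1)] h(2) by simp
      then have gt: "\<forall>x\<in>set (map Min \<tau>'). m < x" using mle by (force simp: w0_def)
      have nm: "m \<notin> set (map Min \<tau>')" using sub by (auto simp: w0_def)
      have "kpsi (y # \<tau>') y' = (if m \<in> y' then kpsi \<tau>' (y' - {m}) else 0)"
        using gt nm unfolding kpsi_def by (auto simp: m_def)
      then show ?thesis by simp
    qed simp
    show ?thesis
    proof (cases "m \<in> y'")
      case True
      have c': "y' - {m} \<in> cells A n" using Suc.prems(2) True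
        by (auto simp: cells_def)
      have "X w0 = (\<Sum>\<tau>'\<in>pchains P n. kphi A n w0 \<tau>' * kpsi \<tau>' (y' - {m}))"
        unfolding X_def using tm True by (auto intro!: sum.cong)
      also have "\<dots> = (if w0 = y' - {m} then 1 else 0)" by (rule Suc.IH[OF w0c c'])
      also have "(w0 = y' - {m}) = (y = y')" using my True by (auto simp: w0_def)
      finally show ?thesis .
    next
      case False
      have "X w0 = 0" unfolding X_def using tm False by (auto intro!: sum.neutral)
      moreover have "y \<noteq> y'" using my False by auto
      ultimately show ?thesis by simp
    qed
  qed
  finally show ?case using eq1 by simp
qed

lemma PP_supp: "\<sigma> \<in> pchains P n \<Longrightarrow> PPk A n \<sigma> \<rho> \<noteq> 0 \<Longrightarrow> \<rho> \<in> pchains P n \<and> hd \<rho> \<subseteq> hd \<sigma>"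
proof -
  assume \<sigma>: "\<sigma> \<in> pchains P n" and "PPk A n \<sigma> \<rho> \<noteq> 0"
  then obtain y where y: "y \<in> cells A n" "kpsi \<sigma> y \<noteq> 0" "kphi A n y \<rho> \<noteq> 0"
    unfolding PPk_def by (metis (mono_tags, lifting) mult_eq_0_iff sum.neutral)
  have "y = set (map Min \<sigma>)" using y(2) by (simp add: kpsi_def split: if_splits)
  then have "y \<subseteq> hd \<sigma>" using mins_sub_hd[OF \<sigma>] by simp
  then show ?thesis using kphi_supp[OF y(1) y(3)] by simp
qed

lemma PP_chain:
  assumes \<sigma>: "\<sigma> \<in> pchains P (Suc n)"
  shows "dvec P (Suc n) (PPk A (Suc n) \<sigma>) \<rho> = (\<Sum>\<tau>\<in>pchains P n. bdS \<sigma> \<tau> * PPk A n \<tau> \<rho>)"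
proof -
  have "dvec P (Suc n) (PPk A (Suc n) \<sigma>) \<rho> = (\<Sum>y\<in>cells A (Suc n). kpsi \<sigma> y * dvec P (Suc n) (kphi A (Suc n) y) \<rho>)"
    unfolding dvec_def PPk_def by (rule sum_assoc)
  also have "\<dots> = (\<Sum>y\<in>cells A (Suc n). kpsi \<sigma> y * (\<Sum>w\<in>cells A n. bdC y w * kphi A n w \<rho>))"
  proof (rule sum.cong[OF refl])
    fix y assume "y \<in> cells A (Suc n)"
    then show "kpsi \<sigma> y * dvec P (Suc n) (kphi A (Suc n) y) \<rho> = kpsi \<sigma> y * (\<Sum>w\<in>cells A n. bdC y w * kphi A n w \<rho>)"
      using phi_chain[of y n \<rho>] by (simp only:)
  qed
  also have "\<dots> = (\<Sum>w\<in>cells A n. (\<Sum>y\<in>cells A (Suc n). kpsi \<sigma> y * bdC y w) * kphi A n w \<rho>)"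
    by (rule sum_assoc[symmetric])
  also have "\<dots> = (\<Sum>w\<in>cells A n. (\<Sum>\<tau>\<in>pchains P n. bdS \<sigma> \<tau> * kpsi \<tau> w) * kphi A n w \<rho>)"
    using psi_chain[OF \<sigma>] by simp
  also have "\<dots> = (\<Sum>\<tau>\<in>pchains P n. bdS \<sigma> \<tau> * PPk A n \<tau> \<rho>)"
    unfolding PPk_def by (rule sum_assoc)
  finally show ?thesis .
qed

lemma bdS_hd: "\<sigma> \<in> pchains P (Suc n) \<Longrightarrow> bdS \<sigma> \<tau> \<noteq> 0 \<Longrightarrow> hd \<tau> \<subseteq> hd \<sigma>"
proof -
  assume \<sigma>: "\<sigma> \<in> pchains P (Suc n)" and "bdS \<sigma> \<tau> \<noteq> 0"
  then obtain i where "i < length \<sigma>" "face i \<sigma> = \<tau>" using bdS_nz by blast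
  moreover have "length \<sigma> = Suc (Suc n)" using \<sigma> by (simp add: pchains_def)
  ultimately show ?thesis using hd_face_sub[OF \<sigma>, of i] by simp
qed

lemma K_supp: "\<sigma> \<in> pchains P n \<Longrightarrow> kK A n \<sigma> \<rho> \<noteq> 0 \<Longrightarrow> \<rho> \<in> pchains P (Suc n) \<and> hd \<rho> = hd \<sigma>"
proof (induction n arbitrary: \<sigma> \<rho>)
  case (0 \<sigma> \<rho>)
  show ?case
  proof (rule cone_supp[where U="\<lambda>\<rho>. (if \<sigma> = \<rho> then 1 else 0) - PPk A 0 \<sigma> \<rho>"])
    show "hd \<sigma> \<in> P" using pchains_hd_in[OF 0(1)] .
    show "cone (hd \<sigma>) (\<lambda>\<rho>. (if \<sigma> = \<rho> then 1 else 0) - PPk A 0 \<sigma> \<rho>) \<rho> \<noteq> 0" using 0(2) by simp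
    fix \<tau> assume "(if \<sigma> = \<tau> then 1 else 0) - PPk A 0 \<sigma> \<tau> \<noteq> 0"
    then show "\<tau> \<in> pchains P 0 \<and> hd \<tau> \<subseteq> hd \<sigma>" using PP_supp[OF 0(1), of \<tau>] 0(1)
      by (cases "\<sigma> = \<tau>") auto
  qed
next
  case (Suc n \<sigma> \<rho>)
  show ?case
  proof (rule cone_supp[where U="\<lambda>\<rho>. (if \<sigma> = \<rho> then 1 else 0) - PPk A (Suc n) \<sigma> \<rho>
       - (\<Sum>\<tau>\<in>pchains P n. bdS \<sigma> \<tau> * kK A n \<tau> \<rho>)"])
    show "hd \<sigma> \<in> P" using pchains_hd_in[OF Suc.prems(1)] .
    show "cone (hd \<sigma>) (\<lambda>\<rho>. (if \<sigma> = \<rho> then 1 else 0) - PPk A (Suc n) \<sigma> \<rho>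
       - (\<Sum>\<tau>\<in>pchains P n. bdS \<sigma> \<tau> * kK A n \<tau> \<rho>)) \<rho> \<noteq> 0" using Suc.prems(2) by simp
    fix \<tau> assume nz: "(if \<sigma> = \<tau> then 1 else 0) - PPk A (Suc n) \<sigma> \<tau> - (\<Sum>\<tau>'\<in>pchains P n. bdS \<sigma> \<tau>' * kK A n \<tau>' \<tau>) \<noteq> 0"
    show "\<tau> \<in> pchains P (Suc n) \<and> hd \<tau> \<subseteq> hd \<sigma>"
    proof (cases "\<sigma> = \<tau> \<or> PPk A (Suc n) \<sigma> \<tau> \<noteq> 0")
      case True
      then show ?thesis using PP_supp[OF Suc.prems(1), of \<tau>] Suc.prems(1) by auto
    next
      case False
      then have "(\<Sum>\<tau>'\<in>pchains P n. bdS \<sigma> \<tau>' * kK A n \<tau>' \<tau>) \<noteq> 0" using nz by auto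
      then obtain \<tau>' where t: "\<tau>' \<in> pchains P n" "bdS \<sigma> \<tau>' \<noteq> 0" "kK A n \<tau>' \<tau> \<noteq> 0"
        by (metis (mono_tags, lifting) mult_eq_0_iff sum.neutral)
      then show ?thesis using Suc.IH[OF t(1) t(3)] bdS_hd[OF Suc.prems(1) t(2)] by simp
    qed
  qed
qed

lemma homot0:
  assumes \<sigma>: "\<sigma> \<in> pchains P 0"
  shows "dvec P (Suc 0) (kK A 0 \<sigma>) \<rho> + Rk A 0 \<sigma> \<rho> = (if \<sigma> = \<rho> then 1 else 0) - PPk A 0 \<sigma> \<rho>"
proof -
  define U where "U = (\<lambda>\<rho>. (if \<sigma> = \<rho> then 1 else 0) - PPk A 0 \<sigma> \<rho>)"
  have Us: "U \<tau> \<noteq> 0 \<Longrightarrow> \<tau> \<in> pchains P 0 \<and> hd \<tau> \<subseteq> hd \<sigma>" for \<tau>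
    using PP_supp[OF \<sigma>, of \<tau>] \<sigma> by (cases "\<sigma> = \<tau>") (auto simp: U_def)
  have s1: "(\<Sum>\<tau>\<in>pchains P 0. kphi A 0 y \<tau>) = 1" if "y \<in> cells A 0" for y
  proof -
    have "[y] \<in> pchains P 0" using cells_P[OF that] by (simp add: pchains_def)
    then show ?thesis using finpch by (simp add: sum.delta')
  qed
  have "(\<Sum>\<tau>\<in>pchains P 0. PPk A 0 \<sigma> \<tau>) = (\<Sum>\<tau>\<in>pchains P 0. (\<Sum>y\<in>cells A 0. kpsi \<sigma> y * kphi A 0 y \<tau>) * 1)"
    by (simp add: PPk_def)
  also have "\<dots> = (\<Sum>y\<in>cells A 0. kpsi \<sigma> y * (\<Sum>\<tau>\<in>pchains P 0. kphi A 0 y \<tau> * 1))"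
    by (rule sum_assoc)
  also have "\<dots> = (\<Sum>y\<in>cells A 0. kpsi \<sigma> y)" using s1 by simp
  also have "\<dots> = 1" by (rule kpsi_sum_one[OF \<sigma>])
  finally have sPP: "(\<Sum>\<tau>\<in>pchains P 0. PPk A 0 \<sigma> \<tau>) = 1" .
  have sU: "(\<Sum>\<tau>\<in>pchains P 0. U \<tau>) = 0"
    using sPP \<sigma> finpch by (simp add: U_def sum_subtractf sum.delta)
  have bd: "\<tau> \<in> pchains P 0 \<Longrightarrow> bdS \<tau> \<rho>' = (if \<rho>' = [] then 1 else 0)" for \<tau> \<rho>'
    by (auto simp: pchains0 bdS_single)
  have d0: "dvec P 0 U \<rho>' = 0" for \<rho>'
  proof -
    have "dvec P 0 U \<rho>' = (\<Sum>\<tau>\<in>pchains P 0. U \<tau> * (if \<rho>' = [] then 1 else 0))"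
      unfolding dvec_def by (rule sum.cong[OF refl]) (simp add: bd)
    also have "\<dots> = (\<Sum>\<tau>\<in>pchains P 0. U \<tau>) * (if \<rho>' = [] then 1 else 0)"
      by (simp add: sum_distrib_right)
    finally show ?thesis using sU by simp
  qed
  have "dvec P (Suc 0) (cone (hd \<sigma>) U) \<rho> = U \<rho> - cone (hd \<sigma>) (dvec P 0 U) \<rho>"
    by (rule cone_lemma[OF finP pchains_hd_in[OF \<sigma>] Us])
  also have "cone (hd \<sigma>) (dvec P 0 U) \<rho> = 0" using d0 by (cases \<rho>) auto
  finally show ?thesis by (simp add: U_def Rk_def)
qed

lemma homotS:
  assumes \<sigma>: "\<sigma> \<in> pchains P (Suc n)"
    and IH: "\<And>\<tau> \<rho>. \<tau> \<in> pchains P n \<Longrightarrow> dvec P (Suc n) (kK A n \<tau>) \<rho> + Rk A n \<tau> \<rho> = (if \<tau> = \<rho> then 1 else 0) - PPk A n \<tau> \<rho>"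
  shows "dvec P (Suc (Suc n)) (kK A (Suc n) \<sigma>) \<rho> + Rk A (Suc n) \<sigma> \<rho> = (if \<sigma> = \<rho> then 1 else 0) - PPk A (Suc n) \<sigma> \<rho>"
proof -
  define U where "U = (\<lambda>\<rho>. (if \<sigma> = \<rho> then 1 else 0) - PPk A (Suc n) \<sigma> \<rho>
       - (\<Sum>\<tau>\<in>pchains P n. bdS \<sigma> \<tau> * kK A n \<tau> \<rho>))"
  have Us: "U \<tau> \<noteq> 0 \<Longrightarrow> \<tau> \<in> pchains P (Suc n) \<and> hd \<tau> \<subseteq> hd \<sigma>" for \<tau>
  proof -
    assume nz: "U \<tau> \<noteq> 0"
    show ?thesis
    proof (cases "\<sigma> = \<tau> \<or> PPk A (Suc n) \<sigma> \<tau> \<noteq> 0")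
      case True
      then show ?thesis using PP_supp[OF \<sigma>, of \<tau>] \<sigma> by auto
    next
      case False
      then have "(\<Sum>\<tau>'\<in>pchains P n. bdS \<sigma> \<tau>' * kK A n \<tau>' \<tau>) \<noteq> 0" using nz by (auto simp: U_def)
      then obtain \<tau>' where t: "\<tau>' \<in> pchains P n" "bdS \<sigma> \<tau>' \<noteq> 0" "kK A n \<tau>' \<tau> \<noteq> 0"
        by (metis (mono_tags, lifting) mult_eq_0_iff sum.neutral)
      then show ?thesis using K_supp[OF t(1) t(3)] bdS_hd[OF \<sigma> t(2)] by simp
    qed
  qed
  have d0: "dvec P (Suc n) U \<rho>' = 0" for \<rho>'
  proof -
    have a: "(\<Sum>\<rho>0\<in>pchains P (Suc n). (if \<sigma> = \<rho>0 then 1 else 0) * bdS \<rho>0 \<rho>') = bdS \<sigma> \<rho>'"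
      using \<sigma> finpch by (simp add: if_times0 sum.delta')
    have b: "(\<Sum>\<rho>0\<in>pchains P (Suc n). PPk A (Suc n) \<sigma> \<rho>0 * bdS \<rho>0 \<rho>') = (\<Sum>\<tau>\<in>pchains P n. bdS \<sigma> \<tau> * PPk A n \<tau> \<rho>')"
      using PP_chain[OF \<sigma>, of \<rho>'] by (simp add: dvec_def)
    have c: "(\<Sum>\<rho>0\<in>pchains P (Suc n). (\<Sum>\<tau>\<in>pchains P n. bdS \<sigma> \<tau> * kK A n \<tau> \<rho>0) * bdS \<rho>0 \<rho>')
        = (\<Sum>\<tau>\<in>pchains P n. bdS \<sigma> \<tau> * ((if \<tau> = \<rho>' then 1 else 0) - PPk A n \<tau> \<rho>' - Rk A n \<tau> \<rho>'))"
    proof -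
      have "(\<Sum>\<rho>0\<in>pchains P (Suc n). (\<Sum>\<tau>\<in>pchains P n. bdS \<sigma> \<tau> * kK A n \<tau> \<rho>0) * bdS \<rho>0 \<rho>')
         = (\<Sum>\<tau>\<in>pchains P n. bdS \<sigma> \<tau> * dvec P (Suc n) (kK A n \<tau>) \<rho>')"
        unfolding dvec_def by (rule sum_assoc)
      also have "\<dots> = (\<Sum>\<tau>\<in>pchains P n. bdS \<sigma> \<tau> * ((if \<tau> = \<rho>' then 1 else 0) - PPk A n \<tau> \<rho>' - Rk A n \<tau> \<rho>'))"
      proof (rule sum.cong[OF refl])
        fix \<tau> show "\<tau> \<in> pchains P n \<Longrightarrow> bdS \<sigma> \<tau> * dvec P (Suc n) (kK A n \<tau>) \<rho>' = bdS \<sigma> \<tau> * ((if \<tau> = \<rho>' then 1 else 0) - PPk A n \<tau> \<rho>' - Rk A n \<tau> \<rho>')"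
        proof -
          assume "\<tau> \<in> pchains P n"
          then have "dvec P (Suc n) (kK A n \<tau>) \<rho>' = (if \<tau> = \<rho>' then 1 else 0) - PPk A n \<tau> \<rho>' - Rk A n \<tau> \<rho>'"
            using IH[of \<tau> \<rho>'] by linarith
          then show ?thesis by simp
        qed
      qed
      finally show ?thesis .
    qed
    have d: "(\<Sum>\<tau>\<in>pchains P n. bdS \<sigma> \<tau> * (if \<tau> = \<rho>' then 1 else 0)) = bdS \<sigma> \<rho>'"
    proof (cases "\<rho>' \<in> pchains P n")
      case True then show ?thesis using finpch by (simp add: times_if0 sum.delta')
    next
      case False then show ?thesis using bdS_zero_out[OF \<sigma> False] by (auto intro!: sum.neutral)
    qed
    have e: "(\<Sum>\<tau>\<in>pchains P n. bdS \<sigma> \<tau> * Rk A n \<tau> \<rho>') = 0"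
    proof (cases n)
      case 0 then show ?thesis by (simp add: Rk_def)
    next
      case (Suc m)
      have "(\<Sum>\<tau>\<in>pchains P n. bdS \<sigma> \<tau> * Rk A n \<tau> \<rho>')
          = (\<Sum>\<tau>\<in>pchains P (Suc m). bdS \<sigma> \<tau> * (\<Sum>\<tau>'\<in>pchains P m. bdS \<tau> \<tau>' * kK A m \<tau>' \<rho>'))"
        by (simp add: Rk_def Suc)
      also have "\<dots> = (\<Sum>\<tau>'\<in>pchains P m. (\<Sum>\<tau>\<in>pchains P (Suc m). bdS \<sigma> \<tau> * bdS \<tau> \<tau>') * kK A m \<tau>' \<rho>')"
        by (rule sum_assoc[symmetric])
      also have "\<dots> = 0" using dd_zero[OF finP] \<sigma> Suc by simp
      finally show ?thesis .
    qed
    have "dvec P (Suc n) U \<rho>' = (\<Sum>\<rho>0\<in>pchains P (Suc n). (if \<sigma> = \<rho>0 then 1 else 0) * bdS \<rho>0 \<rho>')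
       - (\<Sum>\<rho>0\<in>pchains P (Suc n). PPk A (Suc n) \<sigma> \<rho>0 * bdS \<rho>0 \<rho>')
       - (\<Sum>\<rho>0\<in>pchains P (Suc n). (\<Sum>\<tau>\<in>pchains P n. bdS \<sigma> \<tau> * kK A n \<tau> \<rho>0) * bdS \<rho>0 \<rho>')"
      unfolding dvec_def U_def by (simp add: left_diff_distrib sum_subtractf)
    also have "\<dots> = 0"
      unfolding a b c using d e by (simp add: right_diff_distrib sum_subtractf)
    finally show ?thesis .
  qed
  have "dvec P (Suc (Suc n)) (cone (hd \<sigma>) U) \<rho> = U \<rho> - cone (hd \<sigma>) (dvec P (Suc n) U) \<rho>"
    by (rule cone_lemma[OF finP pchains_hd_in[OF \<sigma>] Us])
  also have "cone (hd \<sigma>) (dvec P (Suc n) U) \<rho> = 0" using d0 by (cases \<rho>) auto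
  finally show ?thesis by (simp add: U_def Rk_def)
qed

lemma homot:
  "\<sigma> \<in> pchains P n \<Longrightarrow> dvec P (Suc n) (kK A n \<sigma>) \<rho> + Rk A n \<sigma> \<rho> = (if \<sigma> = \<rho> then 1 else 0) - PPk A n \<sigma> \<rho>"
proof (induction n arbitrary: \<sigma> \<rho>)
  case 0 then show ?case by (rule homot0)
next
  case (Suc n) then show ?case using homotS by blast
qed

end

definition Op :: "('r::comm_ring_1 \<Rightarrow> 'm::ab_group_add \<Rightarrow> 'm) \<Rightarrow> ('a set \<Rightarrow> 'a set \<Rightarrow> 'm \<Rightarrow> 'm)
   \<Rightarrow> ('i \<Rightarrow> 'a set) \<Rightarrow> 'i set \<Rightarrow> ('j \<Rightarrow> 'a set) \<Rightarrow> 'j set \<Rightarrow> ('i \<Rightarrow> 'j \<Rightarrow> int) \<Rightarrow> ('i \<Rightarrow> 'm) \<Rightarrow> 'j \<Rightarrow> 'm" where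
  "Op s res t1 I t2 J k c = (\<lambda>\<tau>. if \<tau> \<in> J then (\<Sum>\<sigma>\<in>I. s (of_int (k \<sigma> \<tau>)) (res (t1 \<sigma>) (t2 \<tau>) (c \<sigma>))) else 0)"

definition carr :: "('i \<Rightarrow> 'j \<Rightarrow> int) \<Rightarrow> ('i \<Rightarrow> 'a set) \<Rightarrow> 'i set \<Rightarrow> ('j \<Rightarrow> 'a set) \<Rightarrow> 'j set \<Rightarrow> bool" where
  "carr k t1 I t2 J \<longleftrightarrow> (\<forall>\<sigma>\<in>I. \<forall>\<tau>\<in>J. k \<sigma> \<tau> \<noteq> 0 \<longrightarrow> t2 \<tau> \<subseteq> t1 \<sigma>)"

lemma Op_out: "\<tau> \<notin> J \<Longrightarrow> Op s res t1 I t2 J k c \<tau> = 0"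
  by (simp add: Op_def)

lemma Op_in: "\<tau> \<in> J \<Longrightarrow> Op s res t1 I t2 J k c \<tau> = (\<Sum>\<sigma>\<in>I. s (of_int (k \<sigma> \<tau>)) (res (t1 \<sigma>) (t2 \<tau>) (c \<sigma>)))"
  by (simp add: Op_def)

lemma Op_cong_k: "(\<And>\<sigma> \<tau>. \<sigma> \<in> I \<Longrightarrow> \<tau> \<in> J \<Longrightarrow> k \<sigma> \<tau> = k' \<sigma> \<tau>) \<Longrightarrow> Op s res t1 I t2 J k c = Op s res t1 I t2 J k' c"
  by (auto simp: Op_def fun_eq_iff intro!: sum.cong)

lemma Op_cong_c: "(\<And>\<sigma>. \<sigma> \<in> I \<Longrightarrow> c \<sigma> = c' \<sigma>) \<Longrightarrow> Op s res t1 I t2 J k c = Op s res t1 I t2 J k c'"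
  by (auto simp: Op_def fun_eq_iff intro!: sum.cong)

locale shf = finA A + module s
  for A :: "'a::linorder set" and s :: "'r::comm_ring_1 \<Rightarrow> 'm::ab_group_add \<Rightarrow> 'm" +
  fixes F :: "'a set \<Rightarrow> 'm set" and res :: "'a set \<Rightarrow> 'a set \<Rightarrow> 'm \<Rightarrow> 'm"
  assumes sh: "is_sheaf s (Pow A) F res"
begin

definition vld :: "('i \<Rightarrow> 'a set) \<Rightarrow> 'i set \<Rightarrow> ('i \<Rightarrow> 'm) \<Rightarrow> bool" where
  "vld t I c \<longleftrightarrow> (\<forall>\<sigma>\<in>I. t \<sigma> \<subseteq> A \<and> c \<sigma> \<in> F (t \<sigma>))"

lemma F0: "x \<subseteq> A \<Longrightarrow> 0 \<in> F x"
  using sh by (simp add: is_sheaf_def)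
lemma Fadd: "x \<subseteq> A \<Longrightarrow> u \<in> F x \<Longrightarrow> v \<in> F x \<Longrightarrow> u + v \<in> F x"
  using sh by (simp add: is_sheaf_def)
lemma Fscale: "x \<subseteq> A \<Longrightarrow> u \<in> F x \<Longrightarrow> s r u \<in> F x"
  using sh by (simp add: is_sheaf_def)
lemma Fsum: "x \<subseteq> A \<Longrightarrow> (\<And>i. i \<in> I \<Longrightarrow> f i \<in> F x) \<Longrightarrow> sum f I \<in> F x"
proof (induction I rule: infinite_finite_induct)
  case (infinite I) then show ?case using F0 by simp
next
  case empty then show ?case using F0 by simp
next
  case (insert i I) then show ?case using Fadd by simp
qed
lemma res_in: "x \<subseteq> y \<Longrightarrow> y \<subseteq> A \<Longrightarrow> v \<in> F y \<Longrightarrow> res y x v \<in> F x"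
  using sh unfolding is_sheaf_def by (meson Pow_iff order_trans)
lemma res_lin: "x \<subseteq> y \<Longrightarrow> y \<subseteq> A \<Longrightarrow> lin_on s s (F y) (res y x)"
  using sh unfolding is_sheaf_def by (meson Pow_iff order_trans)
lemma res_add: "x \<subseteq> y \<Longrightarrow> y \<subseteq> A \<Longrightarrow> u \<in> F y \<Longrightarrow> v \<in> F y \<Longrightarrow> res y x (u + v) = res y x u + res y x v"
  using res_lin by (simp add: lin_on_def)
lemma res_scale: "x \<subseteq> y \<Longrightarrow> y \<subseteq> A \<Longrightarrow> u \<in> F y \<Longrightarrow> res y x (s r u) = s r (res y x u)"
  using res_lin by (simp add: lin_on_def)
lemma res_zero: "x \<subseteq> y \<Longrightarrow> y \<subseteq> A \<Longrightarrow> res y x 0 = 0"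
proof -
  assume a: "x \<subseteq> y" "y \<subseteq> A"
  have "res y x (0 + 0) = res y x 0 + res y x 0" using res_add[OF a F0[OF a(2)] F0[OF a(2)]] .
  then show ?thesis by simp
qed
lemma res_sum: "x \<subseteq> y \<Longrightarrow> y \<subseteq> A \<Longrightarrow> (\<And>i. i \<in> I \<Longrightarrow> f i \<in> F y) \<Longrightarrow> res y x (sum f I) = (\<Sum>i\<in>I. res y x (f i))"
proof (induction I rule: infinite_finite_induct)
  case (infinite I) then show ?case using res_zero by simp
next
  case empty then show ?case using res_zero by simp
next
  case (insert i I)
  have "sum f I \<in> F y" using Fsum[of y I f] insert.prems by auto
  then have "res y x (f i + sum f I) = res y x (f i) + res y x (sum f I)"
    using res_add insert.prems by auto
  then show ?case using insert by simp
qed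
lemma res_id: "x \<subseteq> A \<Longrightarrow> v \<in> F x \<Longrightarrow> res x x v = v"
  using sh unfolding is_sheaf_def by blast
lemma res_comp: "x \<subseteq> y \<Longrightarrow> y \<subseteq> z \<Longrightarrow> z \<subseteq> A \<Longrightarrow> v \<in> F z \<Longrightarrow> res y x (res z y v) = res z x v"
  using sh unfolding is_sheaf_def by (meson Pow_iff order_trans)

lemma term_in:
  assumes "t1 \<subseteq> A" "c \<in> F t1" "t2 \<subseteq> A" "k \<noteq> 0 \<longrightarrow> t2 \<subseteq> t1"
  shows "s (of_int k) (res t1 t2 c) \<in> F t2"
proof (cases "k = 0")
  case True then show ?thesis using F0 assms by simp
next
  case False then show ?thesis using assms res_in Fscale by simp
qed

lemma Op_vld:
  assumes "vld t1 I c" "\<forall>\<tau>\<in>J. t2 \<tau> \<subseteq> A" "carr k t1 I t2 J"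
  shows "vld t2 J (Op s res t1 I t2 J k c)"
  unfolding vld_def
proof
  fix \<tau> assume \<tau>: "\<tau> \<in> J"
  have "Op s res t1 I t2 J k c \<tau> \<in> F (t2 \<tau>)"
    unfolding Op_in[OF \<tau>] using assms \<tau> by (intro Fsum term_in) (auto simp: vld_def carr_def)
  then show "t2 \<tau> \<subseteq> A \<and> Op s res t1 I t2 J k c \<tau> \<in> F (t2 \<tau>)" using assms \<tau> by simp
qed

lemma scale_of_int_mult: "s (of_int a) (s (of_int b) x) = s (of_int (b * a)) x"
  by (simp add: mult.commute)

lemma Op_comp:
  assumes fI: "finite I" and fJ: "finite J" and c: "vld t1 I c" and tJ: "\<forall>\<tau>\<in>J. t2 \<tau> \<subseteq> A"
    and tL: "\<forall>\<rho>\<in>L. t3 \<rho> \<subseteq> A" and ck: "carr k t1 I t2 J" and cl: "carr l t2 J t3 L"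
  shows "Op s res t2 J t3 L l (Op s res t1 I t2 J k c) = Op s res t1 I t3 L (\<lambda>\<sigma> \<rho>. \<Sum>\<tau>\<in>J. k \<sigma> \<tau> * l \<tau> \<rho>) c"
proof (rule ext)
  fix \<rho>
  show "Op s res t2 J t3 L l (Op s res t1 I t2 J k c) \<rho> = Op s res t1 I t3 L (\<lambda>\<sigma> \<rho>. \<Sum>\<tau>\<in>J. k \<sigma> \<tau> * l \<tau> \<rho>) c \<rho>"
  proof (cases "\<rho> \<in> L")
    case False then show ?thesis by (simp add: Op_out)
  next
    case \<rho>: True
    have step: "s (of_int (l \<tau> \<rho>)) (res (t2 \<tau>) (t3 \<rho>) (Op s res t1 I t2 J k c \<tau>))
       = (\<Sum>\<sigma>\<in>I. s (of_int (k \<sigma> \<tau> * l \<tau> \<rho>)) (res (t1 \<sigma>) (t3 \<rho>) (c \<sigma>)))" if \<tau>: "\<tau> \<in> J" for \<tau>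
    proof (cases "l \<tau> \<rho> = 0")
      case True then show ?thesis by simp
    next
      case False
      then have sub: "t3 \<rho> \<subseteq> t2 \<tau>" using cl \<tau> \<rho> by (auto simp: carr_def)
      have t2A: "t2 \<tau> \<subseteq> A" using tJ \<tau> by auto
      have mem: "\<And>\<sigma>. \<sigma> \<in> I \<Longrightarrow> s (of_int (k \<sigma> \<tau>)) (res (t1 \<sigma>) (t2 \<tau>) (c \<sigma>)) \<in> F (t2 \<tau>)"
        using c ck \<tau> t2A by (intro term_in) (auto simp: vld_def carr_def)
      have "res (t2 \<tau>) (t3 \<rho>) (Op s res t1 I t2 J k c \<tau>)
          = (\<Sum>\<sigma>\<in>I. res (t2 \<tau>) (t3 \<rho>) (s (of_int (k \<sigma> \<tau>)) (res (t1 \<sigma>) (t2 \<tau>) (c \<sigma>))))"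
        unfolding Op_in[OF \<tau>] by (rule res_sum[OF sub t2A mem])
      also have "\<dots> = (\<Sum>\<sigma>\<in>I. s (of_int (k \<sigma> \<tau>)) (res (t1 \<sigma>) (t3 \<rho>) (c \<sigma>)))"
      proof (rule sum.cong[OF refl])
        fix \<sigma> assume \<sigma>: "\<sigma> \<in> I"
        show "res (t2 \<tau>) (t3 \<rho>) (s (of_int (k \<sigma> \<tau>)) (res (t1 \<sigma>) (t2 \<tau>) (c \<sigma>))) = s (of_int (k \<sigma> \<tau>)) (res (t1 \<sigma>) (t3 \<rho>) (c \<sigma>))"
        proof (cases "k \<sigma> \<tau> = 0")
          case True then show ?thesis using res_zero[OF sub t2A] by simp
        next
          case False
          then have sub2: "t2 \<tau> \<subseteq> t1 \<sigma>" using ck \<sigma> \<tau> by (auto simp: carr_def)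
          have t1A: "t1 \<sigma> \<subseteq> A" "c \<sigma> \<in> F (t1 \<sigma>)" using c \<sigma> by (auto simp: vld_def)
          have "res (t1 \<sigma>) (t2 \<tau>) (c \<sigma>) \<in> F (t2 \<tau>)" using res_in[OF sub2 t1A] .
          then show ?thesis using res_scale[OF sub t2A] res_comp[OF sub sub2 t1A] by simp
        qed
      qed
      finally show ?thesis by (simp add: scale_sum_right scale_of_int_mult mult.commute)
    qed
    have "Op s res t2 J t3 L l (Op s res t1 I t2 J k c) \<rho> = (\<Sum>\<tau>\<in>J. \<Sum>\<sigma>\<in>I. s (of_int (k \<sigma> \<tau> * l \<tau> \<rho>)) (res (t1 \<sigma>) (t3 \<rho>) (c \<sigma>)))"
      unfolding Op_in[OF \<rho>] by (rule sum.cong[OF refl]) (rule step)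
    also have "\<dots> = (\<Sum>\<sigma>\<in>I. \<Sum>\<tau>\<in>J. s (of_int (k \<sigma> \<tau> * l \<tau> \<rho>)) (res (t1 \<sigma>) (t3 \<rho>) (c \<sigma>)))"
      by (rule sum.swap)
    also have "\<dots> = Op s res t1 I t3 L (\<lambda>\<sigma> \<rho>. \<Sum>\<tau>\<in>J. k \<sigma> \<tau> * l \<tau> \<rho>) c \<rho>"
      unfolding Op_in[OF \<rho>] by (simp add: scale_sum_left)
    finally show ?thesis .
  qed
qed

lemma Op_add_k: "Op s res t1 I t2 J (\<lambda>\<sigma> \<tau>. k1 \<sigma> \<tau> + k2 \<sigma> \<tau>) c = Op s res t1 I t2 J k1 c + Op s res t1 I t2 J k2 c"
  by (auto simp: Op_def fun_eq_iff scale_left_distrib sum.distrib)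

lemma Op_diff_k: "Op s res t1 I t2 J (\<lambda>\<sigma> \<tau>. k1 \<sigma> \<tau> - k2 \<sigma> \<tau>) c = Op s res t1 I t2 J k1 c - Op s res t1 I t2 J k2 c"
  by (auto simp: Op_def fun_eq_iff scale_left_diff_distrib sum_subtractf)

lemma Op_zero_k: "Op s res t1 I t2 J (\<lambda>\<sigma> \<tau>. 0) c = 0"
  by (auto simp: Op_def fun_eq_iff)

lemma Op_id:
  assumes "finite I" "vld t I c" "\<And>\<sigma>. \<sigma> \<notin> I \<Longrightarrow> c \<sigma> = 0"
  shows "Op s res t I t I (\<lambda>\<sigma> \<tau>. if \<sigma> = \<tau> then 1 else 0) c = c"
proof (rule ext)
  fix \<tau>
  show "Op s res t I t I (\<lambda>\<sigma> \<tau>. if \<sigma> = \<tau> then 1 else 0) c \<tau> = c \<tau>"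
  proof (cases "\<tau> \<in> I")
    case True
    have "Op s res t I t I (\<lambda>\<sigma> \<tau>. if \<sigma> = \<tau> then 1 else 0) c \<tau> = (\<Sum>\<sigma>\<in>I. if \<sigma> = \<tau> then res (t \<sigma>) (t \<tau>) (c \<sigma>) else 0)"
      unfolding Op_in[OF True] by (rule sum.cong) auto
    also have "\<dots> = res (t \<tau>) (t \<tau>) (c \<tau>)" using assms(1) True by simp
    also have "\<dots> = c \<tau>" using assms(2) True res_id by (auto simp: vld_def)
    finally show ?thesis .
  next
    case False then show ?thesis using assms(3) by (simp add: Op_out)
  qed
qed

lemma Op_add_c:
  assumes "vld t1 I c1" "vld t1 I c2" "carr k t1 I t2 J"
  shows "Op s res t1 I t2 J k (c1 + c2) = Op s res t1 I t2 J k c1 + Op s res t1 I t2 J k c2"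
proof (rule ext)
  fix \<tau>
  show "Op s res t1 I t2 J k (c1 + c2) \<tau> = (Op s res t1 I t2 J k c1 + Op s res t1 I t2 J k c2) \<tau>"
  proof (cases "\<tau> \<in> J")
    case True
    have "\<And>\<sigma>. \<sigma> \<in> I \<Longrightarrow> s (of_int (k \<sigma> \<tau>)) (res (t1 \<sigma>) (t2 \<tau>) (c1 \<sigma> + c2 \<sigma>))
        = s (of_int (k \<sigma> \<tau>)) (res (t1 \<sigma>) (t2 \<tau>) (c1 \<sigma>)) + s (of_int (k \<sigma> \<tau>)) (res (t1 \<sigma>) (t2 \<tau>) (c2 \<sigma>))"
    proof -
      fix \<sigma> assume \<sigma>: "\<sigma> \<in> I"
      show "?thesis \<sigma>"
      proof (cases "k \<sigma> \<tau> = 0")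
        case False
        then have "t2 \<tau> \<subseteq> t1 \<sigma>" using assms(3) \<sigma> True by (auto simp: carr_def)
        then show ?thesis using res_add assms(1,2) \<sigma> by (simp add: vld_def scale_right_distrib)
      qed simp
    qed
    then show ?thesis using True by (simp add: Op_in sum.distrib)
  qed (simp add: Op_out)
qed

lemma Op_scale_c:
  assumes "vld t1 I c" "carr k t1 I t2 J"
  shows "Op s res t1 I t2 J k (fscale s r c) = fscale s r (Op s res t1 I t2 J k c)"
proof (rule ext)
  fix \<tau>
  show "Op s res t1 I t2 J k (fscale s r c) \<tau> = fscale s r (Op s res t1 I t2 J k c) \<tau>"
  proof (cases "\<tau> \<in> J")
    case True
    have "\<And>\<sigma>. \<sigma> \<in> I \<Longrightarrow> s (of_int (k \<sigma> \<tau>)) (res (t1 \<sigma>) (t2 \<tau>) (s r (c \<sigma>)))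
        = s r (s (of_int (k \<sigma> \<tau>)) (res (t1 \<sigma>) (t2 \<tau>) (c \<sigma>)))"
    proof -
      fix \<sigma> assume \<sigma>: "\<sigma> \<in> I"
      show "?thesis \<sigma>"
      proof (cases "k \<sigma> \<tau> = 0")
        case False
        then have "t2 \<tau> \<subseteq> t1 \<sigma>" using assms(2) \<sigma> True by (auto simp: carr_def)
        then show ?thesis using res_scale assms(1) \<sigma> by (simp add: vld_def mult.commute)
      qed simp
    qed
    then show ?thesis using True by (simp add: Op_in fscale_def scale_sum_right)
  qed (simp add: Op_out fscale_def)
qed

lemma Op_zero_c:
  assumes "\<forall>\<sigma>\<in>I. t1 \<sigma> \<subseteq> A" "carr k t1 I t2 J"
  shows "Op s res t1 I t2 J k 0 = 0"
proof (rule ext)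
  fix \<tau>
  show "Op s res t1 I t2 J k 0 \<tau> = 0 \<tau>"
  proof (cases "\<tau> \<in> J")
    case True
    have "\<And>\<sigma>. \<sigma> \<in> I \<Longrightarrow> s (of_int (k \<sigma> \<tau>)) (res (t1 \<sigma>) (t2 \<tau>) 0) = 0"
    proof -
      fix \<sigma> assume \<sigma>: "\<sigma> \<in> I"
      show "?thesis \<sigma>"
      proof (cases "k \<sigma> \<tau> = 0")
        case False
        then have "t2 \<tau> \<subseteq> t1 \<sigma>" using assms(2) \<sigma> True by (auto simp: carr_def)
        then show ?thesis using res_zero assms(1) \<sigma> by simp
      qed simp
    qed
    then show ?thesis using True by (simp add: Op_in)
  qed (simp add: Op_out)
qed

end

context shf
begin

lemma sc_if: "s (of_int (if Q then a else 0)) X = (if Q then s (of_int a) X else 0)"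
  by simp

lemma alt_scale: "s (of_int ((-1)^i)) v = alt i v"
  by (cases "even i") (simp_all add: alt_def)

lemma alt_scale1: "s (of_int (alt i 1)) v = alt i v"
  by (cases "even i") (simp_all add: alt_def)

lemma alt_zero: "alt i (0::'m) = 0"
  by (simp add: alt_def)

lemma S_car_vld: "c \<in> S_car P F n \<Longrightarrow> vld hd (pchains P n) c"
  unfolding S_car_def vld_def using pchains_hd_in by blast

lemma S_car_out: "c \<in> S_car P F n \<Longrightarrow> \<sigma> \<notin> pchains P n \<Longrightarrow> c \<sigma> = 0"
  unfolding S_car_def by blast

lemma tops_S: "\<forall>\<sigma>\<in>pchains P n. hd \<sigma> \<subseteq> A"
  using pchains_hd_in by blast

lemma tops_C: "\<forall>y\<in>cells A n. id y \<subseteq> A"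
  by (auto simp: cells_def)

lemma Op_S_car: "vld t1 I c \<Longrightarrow> carr k t1 I hd (pchains P n) \<Longrightarrow> Op s res t1 I hd (pchains P n) k c \<in> S_car P F n"
proof -
  assume a: "vld t1 I c" "carr k t1 I hd (pchains P n)"
  have "vld hd (pchains P n) (Op s res t1 I hd (pchains P n) k c)" by (rule Op_vld[OF a(1) tops_S a(2)])
  then show ?thesis unfolding S_car_def vld_def by (auto simp: Op_out)
qed

lemma C_car_vld: "e \<in> C_car A F n \<Longrightarrow> vld id (cells A n) e"
  unfolding C_car_def vld_def cells_def by auto

lemma C_car_out: "e \<in> C_car A F n \<Longrightarrow> y \<notin> cells A n \<Longrightarrow> e y = 0"
  unfolding C_car_def by blast

lemma Op_C_car: "vld t1 I c \<Longrightarrow> carr k t1 I id (cells A n) \<Longrightarrow> Op s res t1 I id (cells A n) k c \<in> C_car A F n"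
proof -
  assume a: "vld t1 I c" "carr k t1 I id (cells A n)"
  have "vld id (cells A n) (Op s res t1 I id (cells A n) k c)" by (rule Op_vld[OF a(1) tops_C a(2)])
  then show ?thesis unfolding C_car_def vld_def by (auto simp: Op_out)
qed

lemma S_d_Op:
  assumes c: "c \<in> S_car P F n"
  shows "S_d P res n c = Op s res hd (pchains P n) hd (pchains P (n - 1)) bdS c"
proof (rule ext)
  fix \<tau>
  show "S_d P res n c \<tau> = Op s res hd (pchains P n) hd (pchains P (n - 1)) bdS c \<tau>"
  proof (cases "\<tau> \<in> pchains P (n - 1)")
    case False then show ?thesis by (simp add: S_d_def Op_out)
  next
    case \<tau>: True
    have "S_d P res n c \<tau> = (\<Sum>\<sigma>\<in>pchains P n. (if face 0 \<sigma> = \<tau> then res (\<sigma> ! 0) (\<sigma> ! 1) (c \<sigma>) else 0)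
         + (\<Sum>i\<in>{1..n}. if face i \<sigma> = \<tau> then alt i (c \<sigma>) else 0))"
      using \<tau> by (simp add: S_d_def)
    also have "\<dots> = (\<Sum>\<sigma>\<in>pchains P n. s (of_int (bdS \<sigma> \<tau>)) (res (hd \<sigma>) (hd \<tau>) (c \<sigma>)))"
    proof (rule sum.cong[OF refl])
      fix \<sigma> assume \<sigma>: "\<sigma> \<in> pchains P n"
      have cs: "c \<sigma> \<in> F (hd \<sigma>)" "hd \<sigma> \<subseteq> A" using S_car_vld[OF c] \<sigma> by (auto simp: vld_def)
      have tne: "\<tau> \<noteq> []" using pchains_ne[OF \<tau>] .
      show "(if face 0 \<sigma> = \<tau> then res (\<sigma> ! 0) (\<sigma> ! 1) (c \<sigma>) else 0)
         + (\<Sum>i\<in>{1..n}. if face i \<sigma> = \<tau> then alt i (c \<sigma>) else 0)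
         = s (of_int (bdS \<sigma> \<tau>)) (res (hd \<sigma>) (hd \<tau>) (c \<sigma>))"
      proof (cases n)
        case 0
        then obtain x where x: "\<sigma> = [x]" using \<sigma> by (auto simp: pchains0)
        then have "bdS \<sigma> \<tau> = 0" using tne by (simp add: bdS_single)
        then show ?thesis using x tne 0 by simp
      next
        case (Suc m)
        have len: "length \<sigma> = Suc (Suc m)" using \<sigma> Suc by (simp add: pchains_def)
        then obtain x0 x1 r where xr: "\<sigma> = x0 # x1 # r" by (metis length_Suc_conv)
        have b: "bdS \<sigma> \<tau> = (if face 0 \<sigma> = \<tau> then 1 else 0) + (\<Sum>i<Suc m. if face (Suc i) \<sigma> = \<tau> then (-1)^(Suc i) else 0)"
          unfolding bdS_def len sum.lessThan_Suc_shift by simp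
        have "s (of_int (bdS \<sigma> \<tau>)) (res (hd \<sigma>) (hd \<tau>) (c \<sigma>))
            = (if face 0 \<sigma> = \<tau> then res (hd \<sigma>) (hd \<tau>) (c \<sigma>) else 0)
              + (\<Sum>i<Suc m. if face (Suc i) \<sigma> = \<tau> then s (of_int ((-1)^(Suc i))) (res (hd \<sigma>) (hd \<tau>) (c \<sigma>)) else 0)"
          unfolding b of_int_add of_int_sum scale_left_distrib scale_sum_left sc_if by simp
        also have "(if face 0 \<sigma> = \<tau> then res (hd \<sigma>) (hd \<tau>) (c \<sigma>) else 0) = (if face 0 \<sigma> = \<tau> then res (\<sigma> ! 0) (\<sigma> ! 1) (c \<sigma>) else 0)"
          using xr by auto
        also have "(\<Sum>i<Suc m. if face (Suc i) \<sigma> = \<tau> then s (of_int ((-1)^(Suc i))) (res (hd \<sigma>) (hd \<tau>) (c \<sigma>)) else 0)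
            = (\<Sum>i\<in>{1..n}. if face i \<sigma> = \<tau> then alt i (c \<sigma>) else 0)"
          unfolding Suc One_nat_def sum.atLeast1_atMost_eq
        proof (rule sum.cong[OF refl])
          fix i
          show "(if face (Suc i) \<sigma> = \<tau> then s (of_int ((-1)^(Suc i))) (res (hd \<sigma>) (hd \<tau>) (c \<sigma>)) else 0)
             = (if face (Suc i) \<sigma> = \<tau> then alt (Suc i) (c \<sigma>) else 0)"
          proof (cases "face (Suc i) \<sigma> = \<tau>")
            case True
            then have "hd \<tau> = hd \<sigma>" using hd_face[of "Suc i" \<sigma>] xr by auto
            then show ?thesis using True res_id[OF cs(2,1)] alt_scale[of "Suc i"] by (simp del: power_Suc)
          qed simp
        qed
        finally show ?thesis by simp
      qed
    qed
    also have "\<dots> = Op s res hd (pchains P n) hd (pchains P (n - 1)) bdS c \<tau>"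
      using \<tau> by (simp add: Op_in)
    finally show ?thesis .
  qed
qed

lemma C_d_Op:
  assumes e: "e \<in> C_car A F k"
  shows "C_d A res k e = Op s res id (cells A k) id (cells A (k - 1)) bdC e"
proof (rule ext)
  fix w
  show "C_d A res k e w = Op s res id (cells A k) id (cells A (k - 1)) bdC e w"
  proof (cases "w \<in> cells A (k - 1)")
    case False then show ?thesis by (simp add: C_d_def Op_out)
  next
    case w: True
    have wA: "w \<subseteq> A" "finite w" using w cells_fin[OF w] by (simp_all add: cells_def)
    have lhs: "C_d A res k e w = (\<Sum>a\<in>A - w. alt (card {b\<in>w. b < a}) (res (insert a w) w (e (insert a w))))"
      using w by (simp add: C_d_def)
    show ?thesis
    proof (cases k)
      case 0
      have "C_d A res k e w = 0" unfolding lhs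
      proof (rule sum.neutral, rule ballI)
        fix a assume a: "a \<in> A - w"
        have "card (insert a w) = Suc (Suc 0)" using a w wA 0 by (simp add: cells_def)
        then have "insert a w \<notin> cells A k" using 0 by (simp add: cells_def)
        then have "e (insert a w) = 0" using C_car_out[OF e] by simp
        moreover have "res (insert a w) w 0 = 0" using a wA by (intro res_zero) auto
        ultimately show "alt (card {b\<in>w. b < a}) (res (insert a w) w (e (insert a w))) = 0"
          by (simp add: alt_zero)
      qed
      moreover have "Op s res id (cells A k) id (cells A (k - 1)) bdC e w = 0"
        unfolding Op_in[OF w]
      proof (rule sum.neutral, rule ballI)
        fix y assume y: "y \<in> cells A k"
        have "bdC y w = 0"
        proof (rule ccontr)
          assume "bdC y w \<noteq> 0"
          then have "w \<subseteq> y" "card (y - w) = 1" by (auto simp: bdC_def split: if_splits)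
          moreover have "card y = card w" "finite y" using y w 0 cells_fin[OF y] by (auto simp: cells_def)
          ultimately have "w = y" using card_subset_eq[of y w] by simp
          then show False using \<open>card (y - w) = 1\<close> by simp
        qed
        then show "s (of_int (bdC y w)) (res (id y) (id w) (e y)) = 0" by simp
      qed
      ultimately show ?thesis by simp
    next
      case (Suc j)
      let ?g = "\<lambda>y. s (of_int (bdC y w)) (res (id y) (id w) (e y))"
      have wc: "card w = Suc j" using w Suc by (simp add: cells_def)
      have img: "(\<lambda>a. insert a w) ` (A - w) \<subseteq> cells A k"
        using wA wc Suc by (auto simp: cells_def)
      have "Op s res id (cells A k) id (cells A (k - 1)) bdC e w = (\<Sum>y\<in>cells A k. ?g y)"
        by (rule Op_in[OF w])
      also have "\<dots> = (\<Sum>y\<in>(\<lambda>a. insert a w) ` (A - w). ?g y)"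
      proof (rule sum.mono_neutral_right[OF fincells img], rule ballI)
        fix y assume y: "y \<in> cells A k - (\<lambda>a. insert a w) ` (A - w)"
        have "bdC y w = 0"
        proof (rule ccontr)
          assume "bdC y w \<noteq> 0"
          then have sub: "w \<subseteq> y" and c1: "card (y - w) = 1" by (auto simp: bdC_def split: if_splits)
          then obtain a where a: "y - w = {a}" by (meson card_1_singletonE)
          then have "y = insert a w" "a \<in> A - w" using sub y by (auto simp: cells_def)
          then show False using y by auto
        qed
        then show "?g y = 0" by simp
      qed
      also have "\<dots> = (\<Sum>a\<in>A - w. ?g (insert a w))"
        by (subst sum.reindex) (auto simp: inj_on_def)
      also have "\<dots> = (\<Sum>a\<in>A - w. alt (card {b\<in>w. b < a}) (res (insert a w) w (e (insert a w))))"
      proof (rule sum.cong[OF refl])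
        fix a assume a: "a \<in> A - w"
        have "insert a w - w = {a}" using a by auto
        moreover have "w \<subseteq> insert a w" by auto
        ultimately have "bdC (insert a w) w = alt (card {b\<in>w. b < a}) 1" unfolding bdC_def by simp
        then show "?g (insert a w) = alt (card {b\<in>w. b < a}) (res (insert a w) w (e (insert a w)))"
          by (simp add: alt_scale1)
      qed
      finally show ?thesis using lhs by simp
    qed
  qed
qed

lemma carr_bdS: "carr bdS hd (pchains P n) hd (pchains P (n - 1))"
  unfolding carr_def
proof (intro ballI impI)
  fix \<sigma> \<tau> assume \<sigma>: "\<sigma> \<in> pchains P n" and \<tau>: "\<tau> \<in> pchains P (n - 1)" and nz: "bdS \<sigma> \<tau> \<noteq> 0"
  show "hd \<tau> \<subseteq> hd \<sigma>"
  proof (cases n)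
    case 0
    then obtain x where "\<sigma> = [x]" using \<sigma> by (auto simp: pchains0)
    then show ?thesis using nz pchains_ne[OF \<tau>] by (simp add: bdS_single)
  next
    case (Suc m) then show ?thesis using bdS_hd \<sigma> nz by simp
  qed
qed

lemma carr_bdC: "carr bdC id (cells A k) id (cells A j)"
  unfolding carr_def using bdC_sub by auto

lemma carr_kpsi: "carr kpsi hd (pchains P n) id (cells A n)"
  unfolding carr_def using mins_sub_hd by (auto simp: kpsi_def split: if_splits)

lemma carr_kphi: "carr (kphi A n) id (cells A n) hd (pchains P n)"
  unfolding carr_def using kphi_supp by fastforce

lemma carr_kK: "carr (kK A n) hd (pchains P n) hd (pchains P (Suc n))"
  unfolding carr_def using K_supp by fastforce

abbreviation "psiF n \<equiv> Op s res hd (pchains P n) id (cells A n) kpsi"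
abbreviation "phiF n \<equiv> Op s res id (cells A n) hd (pchains P n) (kphi A n)"
abbreviation "KF n \<equiv> Op s res hd (pchains P n) hd (pchains P (Suc n)) (kK A n)"

lemma psiF_car: "c \<in> S_car P F n \<Longrightarrow> psiF n c \<in> C_car A F n"
  by (rule Op_C_car[OF S_car_vld carr_kpsi])

lemma phiF_car: "z \<in> C_car A F n \<Longrightarrow> phiF n z \<in> S_car P F n"
  by (rule Op_S_car[OF C_car_vld carr_kphi])

lemma KF_car: "c \<in> S_car P F n \<Longrightarrow> KF n c \<in> S_car P F (Suc n)"
  by (rule Op_S_car[OF S_car_vld carr_kK])

lemma psi_chainF:
  assumes c: "c \<in> S_car P F (Suc m)"
  shows "C_d A res (Suc m) (psiF (Suc m) c) = psiF m (S_d P res (Suc m) c)"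
proof -
  have "C_d A res (Suc m) (psiF (Suc m) c) = Op s res id (cells A (Suc m)) id (cells A m) bdC (psiF (Suc m) c)"
    using C_d_Op[OF psiF_car[OF c]] by simp
  also have "\<dots> = Op s res hd (pchains P (Suc m)) id (cells A m) (\<lambda>\<sigma> w. \<Sum>y\<in>cells A (Suc m). kpsi \<sigma> y * bdC y w) c"
    by (rule Op_comp[OF finpch fincells S_car_vld[OF c] tops_C tops_C carr_kpsi carr_bdC])
  also have "\<dots> = Op s res hd (pchains P (Suc m)) id (cells A m) (\<lambda>\<sigma> w. \<Sum>\<tau>\<in>pchains P m. bdS \<sigma> \<tau> * kpsi \<tau> w) c"
    by (rule Op_cong_k) (simp add: psi_chain)
  also have "\<dots> = psiF m (Op s res hd (pchains P (Suc m)) hd (pchains P m) bdS c)"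
    using Op_comp[OF finpch finpch S_car_vld[OF c] tops_S tops_C carr_bdS[of "Suc m"] carr_kpsi] by simp
  also have "\<dots> = psiF m (S_d P res (Suc m) c)"
    using S_d_Op[OF c] by simp
  finally show ?thesis .
qed

lemma phi_chainF:
  assumes z: "z \<in> C_car A F (Suc m)"
  shows "S_d P res (Suc m) (phiF (Suc m) z) = phiF m (C_d A res (Suc m) z)"
proof -
  have "S_d P res (Suc m) (phiF (Suc m) z) = Op s res hd (pchains P (Suc m)) hd (pchains P m) bdS (phiF (Suc m) z)"
    using S_d_Op[OF phiF_car[OF z]] by simp
  also have "\<dots> = Op s res id (cells A (Suc m)) hd (pchains P m) (\<lambda>y \<rho>. \<Sum>\<tau>\<in>pchains P (Suc m). kphi A (Suc m) y \<tau> * bdS \<tau> \<rho>) z"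
    using Op_comp[OF fincells finpch C_car_vld[OF z] tops_S tops_S carr_kphi carr_bdS[of "Suc m"]] by simp
  also have "\<dots> = Op s res id (cells A (Suc m)) hd (pchains P m) (\<lambda>y \<rho>. \<Sum>w\<in>cells A m. bdC y w * kphi A m w \<rho>) z"
  proof (rule Op_cong_k)
    fix y \<rho> assume "y \<in> cells A (Suc m)"
    then show "(\<Sum>\<tau>\<in>pchains P (Suc m). kphi A (Suc m) y \<tau> * bdS \<tau> \<rho>) = (\<Sum>w\<in>cells A m. bdC y w * kphi A m w \<rho>)"
      using phi_chain[of y m \<rho>] unfolding dvec_def by (simp only:)
  qed
  also have "\<dots> = phiF m (Op s res id (cells A (Suc m)) id (cells A m) bdC z)"
    using Op_comp[OF fincells fincells C_car_vld[OF z] tops_C tops_S carr_bdC carr_kphi] by simp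
  also have "\<dots> = phiF m (C_d A res (Suc m) z)"
    using C_d_Op[OF z] by simp
  finally show ?thesis .
qed

lemma psiphiF:
  assumes z: "z \<in> C_car A F m"
  shows "psiF m (phiF m z) = z"
proof -
  have "psiF m (phiF m z) = Op s res id (cells A m) id (cells A m) (\<lambda>y y'. \<Sum>\<tau>\<in>pchains P m. kphi A m y \<tau> * kpsi \<tau> y') z"
    by (rule Op_comp[OF fincells finpch C_car_vld[OF z] tops_S tops_C carr_kphi carr_kpsi])
  also have "\<dots> = Op s res id (cells A m) id (cells A m) (\<lambda>y y'. if y = y' then 1 else 0) z"
    by (rule Op_cong_k) (simp add: psiphi)
  also have "\<dots> = z"
    by (rule Op_id[OF fincells C_car_vld[OF z]]) (rule C_car_out[OF z])
  finally show ?thesis .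
qed

lemma homotF:
  assumes c: "c \<in> S_car P F m"
  shows "S_d P res (Suc m) (KF m c) = c - phiF m (psiF m c) - Op s res hd (pchains P m) hd (pchains P m) (Rk A m) c"
proof -
  have "S_d P res (Suc m) (KF m c) = Op s res hd (pchains P (Suc m)) hd (pchains P m) bdS (KF m c)"
    using S_d_Op[OF KF_car[OF c]] by simp
  also have "\<dots> = Op s res hd (pchains P m) hd (pchains P m) (\<lambda>\<sigma> \<rho>. \<Sum>\<tau>\<in>pchains P (Suc m). kK A m \<sigma> \<tau> * bdS \<tau> \<rho>) c"
    using Op_comp[OF finpch finpch S_car_vld[OF c] tops_S tops_S carr_kK carr_bdS[of "Suc m"]] by simp
  also have "\<dots> = Op s res hd (pchains P m) hd (pchains P m)
       (\<lambda>\<sigma> \<rho>. ((if \<sigma> = \<rho> then 1 else 0) - PPk A m \<sigma> \<rho>) - Rk A m \<sigma> \<rho>) c"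
  proof (rule Op_cong_k)
    fix \<sigma> \<rho> assume "\<sigma> \<in> pchains P m"
    then show "(\<Sum>\<tau>\<in>pchains P (Suc m). kK A m \<sigma> \<tau> * bdS \<tau> \<rho>) = ((if \<sigma> = \<rho> then 1 else 0) - PPk A m \<sigma> \<rho>) - Rk A m \<sigma> \<rho>"
      using homot[of \<sigma> m \<rho>] unfolding dvec_def by linarith
  qed
  also have "\<dots> = Op s res hd (pchains P m) hd (pchains P m) (\<lambda>\<sigma> \<rho>. if \<sigma> = \<rho> then 1 else 0) c
      - Op s res hd (pchains P m) hd (pchains P m) (PPk A m) c - Op s res hd (pchains P m) hd (pchains P m) (Rk A m) c"
    by (simp only: Op_diff_k)
  also have "Op s res hd (pchains P m) hd (pchains P m) (\<lambda>\<sigma> \<rho>. if \<sigma> = \<rho> then 1 else 0) c = c"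
    by (rule Op_id[OF finpch S_car_vld[OF c]]) (rule S_car_out[OF c])
  also have "Op s res hd (pchains P m) hd (pchains P m) (PPk A m) c = phiF m (psiF m c)"
  proof -
    have "PPk A m = (\<lambda>\<sigma> \<rho>. \<Sum>y\<in>cells A m. kpsi \<sigma> y * kphi A m y \<rho>)" by (simp add: fun_eq_iff PPk_def)
    then show ?thesis using Op_comp[OF finpch fincells S_car_vld[OF c] tops_C tops_S carr_kpsi carr_kphi] by simp
  qed
  finally show ?thesis .
qed

lemma RkF:
  assumes c: "c \<in> S_car P F m" and cyc: "m = 0 \<or> S_d P res m c = (\<lambda>_. 0)"
  shows "Op s res hd (pchains P m) hd (pchains P m) (Rk A m) c = 0"
proof (cases m)
  case 0
  then have "Rk A m = (\<lambda>\<sigma> \<tau>. 0)" by (simp add: Rk_def fun_eq_iff)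
  then show ?thesis using Op_zero_k[of hd "pchains P m" hd "pchains P m" c] by simp
next
  case (Suc j)
  have cS: "c \<in> S_car P F (Suc j)" using c Suc by simp
  have sd: "Op s res hd (pchains P (Suc j)) hd (pchains P j) bdS c = 0"
    using S_d_Op[OF cS] cyc Suc by (simp add: zero_fun_def)
  have "Op s res hd (pchains P m) hd (pchains P m) (Rk A m) c
      = Op s res hd (pchains P (Suc j)) hd (pchains P (Suc j)) (\<lambda>\<sigma> \<rho>. \<Sum>\<tau>\<in>pchains P j. bdS \<sigma> \<tau> * kK A j \<tau> \<rho>) c"
    unfolding Suc by (rule Op_cong_k) (simp add: Rk_def)
  also have "\<dots> = KF j (Op s res hd (pchains P (Suc j)) hd (pchains P j) bdS c)"
    by (rule Op_comp[OF finpch finpch S_car_vld[OF cS] tops_S tops_S carr_bdS[of "Suc j", simplified] carr_kK, symmetric])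
  also have "\<dots> = KF j 0" by (simp only: sd)
  also have "\<dots> = 0" by (rule Op_zero_c[OF tops_S carr_kK])
  finally show ?thesis .
qed

end

context shf
begin

lemma S_car_add: "c1 \<in> S_car P F n \<Longrightarrow> c2 \<in> S_car P F n \<Longrightarrow> c1 + c2 \<in> S_car P F n"
  unfolding S_car_def using Fadd tops_S by auto

lemma S_d_add:
  assumes "c1 \<in> S_car P F n" "c2 \<in> S_car P F n"
  shows "S_d P res n (c1 + c2) = S_d P res n c1 + S_d P res n c2"
  using S_d_Op[OF S_car_add[OF assms]] S_d_Op[OF assms(1)] S_d_Op[OF assms(2)]
    Op_add_c[OF S_car_vld[OF assms(1)] S_car_vld[OF assms(2)] carr_bdS] by simp

lemma zero_C_car: "0 \<in> C_car A F n"
  unfolding C_car_def using F0 by (auto simp: cells_def)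

lemma main_n: "homology_iso s (S_car P F) (S_d P res) (C_car A F) (C_d A res) n"
proof -
  have L: "lin_on (fscale s) (fscale s) (cycles (S_car P F) (S_d P res) n) (psiF n)"
    unfolding lin_on_def
  proof (intro conjI ballI allI)
    fix u v assume u: "u \<in> cycles (S_car P F) (S_d P res) n" and v: "v \<in> cycles (S_car P F) (S_d P res) n"
    then have "u \<in> S_car P F n" "v \<in> S_car P F n" by (auto simp: cycles_def)
    then show "psiF n (u + v) = psiF n u + psiF n v"
      by (rule Op_add_c[OF S_car_vld S_car_vld carr_kpsi])
  next
    fix r u assume u: "u \<in> cycles (S_car P F) (S_d P res) n"
    then have "u \<in> S_car P F n" by (auto simp: cycles_def)
    then show "psiF n (fscale s r u) = fscale s r (psiF n u)"
      by (rule Op_scale_c[OF S_car_vld carr_kpsi])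
  qed
  have C1: "psiF n ` cycles (S_car P F) (S_d P res) n \<subseteq> cycles (C_car A F) (C_d A res) n"
  proof
    fix z assume "z \<in> psiF n ` cycles (S_car P F) (S_d P res) n"
    then obtain c where c: "c \<in> S_car P F n" "n = 0 \<or> S_d P res n c = (\<lambda>_. 0)" and z: "z = psiF n c"
      by (auto simp: cycles_def)
    have "n = 0 \<or> C_d A res n z = (\<lambda>_. 0)"
    proof (cases n)
      case (Suc m)
      have "C_d A res n z = psiF m (S_d P res (Suc m) c)" using psi_chainF[of c m] c z Suc by simp
      also have "S_d P res (Suc m) c = 0" using c Suc by (simp add: zero_fun_def)
      also have "psiF m 0 = 0" by (rule Op_zero_c[OF tops_S carr_kpsi])
      finally show ?thesis by (simp add: zero_fun_def)
    qed simp
    then show "z \<in> cycles (C_car A F) (C_d A res) n"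
      using psiF_car[OF c(1)] z by (simp add: cycles_def)
  qed
  have C2: "psiF n ` boundaries (S_car P F) (S_d P res) n \<subseteq> boundaries (C_car A F) (C_d A res) n"
  proof
    fix z assume "z \<in> psiF n ` boundaries (S_car P F) (S_d P res) n"
    then obtain b where b: "b \<in> S_car P F (Suc n)" and z: "z = psiF n (S_d P res (Suc n) b)"
      by (auto simp: boundaries_def)
    have "z = C_d A res (Suc n) (psiF (Suc n) b)" using psi_chainF[OF b] z by simp
    then show "z \<in> boundaries (C_car A F) (C_d A res) n"
      using psiF_car[OF b] by (simp add: boundaries_def)
  qed
  have zb: "0 \<in> boundaries (C_car A F) (C_d A res) n"
  proof -
    have "C_d A res (Suc n) 0 = Op s res id (cells A (Suc n)) id (cells A n) bdC 0"
      using C_d_Op[OF zero_C_car] by simp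
    also have "\<dots> = 0" by (rule Op_zero_c[OF tops_C carr_bdC])
    finally show ?thesis using zero_C_car unfolding boundaries_def by (metis image_eqI)
  qed
  have C3: "\<forall>z\<in>cycles (C_car A F) (C_d A res) n. \<exists>c\<in>cycles (S_car P F) (S_d P res) n.
        z - psiF n c \<in> boundaries (C_car A F) (C_d A res) n"
  proof
    fix z assume "z \<in> cycles (C_car A F) (C_d A res) n"
    then have z: "z \<in> C_car A F n" "n = 0 \<or> C_d A res n z = (\<lambda>_. 0)" by (auto simp: cycles_def)
    have "n = 0 \<or> S_d P res n (phiF n z) = (\<lambda>_. 0)"
    proof (cases n)
      case (Suc m)
      have "S_d P res n (phiF n z) = phiF m (C_d A res (Suc m) z)" using phi_chainF[of z m] z Suc by simp
      also have "C_d A res (Suc m) z = 0" using z Suc by (simp add: zero_fun_def)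
      also have "phiF m 0 = 0" by (rule Op_zero_c[OF tops_C carr_kphi])
      finally have "S_d P res n (phiF n z) = 0" .
      then show ?thesis unfolding zero_fun_def by blast
    qed simp
    then have "phiF n z \<in> cycles (S_car P F) (S_d P res) n"
      using phiF_car[OF z(1)] by (simp add: cycles_def)
    moreover have "z - psiF n (phiF n z) = 0" using psiphiF[OF z(1)] by simp
    ultimately show "\<exists>c\<in>cycles (S_car P F) (S_d P res) n. z - psiF n c \<in> boundaries (C_car A F) (C_d A res) n"
      using zb by metis
  qed
  have C4: "\<forall>c\<in>cycles (S_car P F) (S_d P res) n. psiF n c \<in> boundaries (C_car A F) (C_d A res) n
        \<longrightarrow> c \<in> boundaries (S_car P F) (S_d P res) n"
  proof (intro ballI impI)
    fix c assume "c \<in> cycles (S_car P F) (S_d P res) n"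
    then have c: "c \<in> S_car P F n" "n = 0 \<or> S_d P res n c = (\<lambda>_. 0)" by (auto simp: cycles_def)
    assume "psiF n c \<in> boundaries (C_car A F) (C_d A res) n"
    then obtain b where b: "b \<in> C_car A F (Suc n)" "psiF n c = C_d A res (Suc n) b"
      by (auto simp: boundaries_def)
    define x where "x = KF n c + phiF (Suc n) b"
    have xS: "x \<in> S_car P F (Suc n)" unfolding x_def by (rule S_car_add[OF KF_car[OF c(1)] phiF_car[OF b(1)]])
    have "S_d P res (Suc n) x = S_d P res (Suc n) (KF n c) + S_d P res (Suc n) (phiF (Suc n) b)"
      unfolding x_def by (rule S_d_add[OF KF_car[OF c(1)] phiF_car[OF b(1)]])
    also have "S_d P res (Suc n) (KF n c) = c - phiF n (psiF n c) - Op s res hd (pchains P n) hd (pchains P n) (Rk A n) c"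
      by (rule homotF[OF c(1)])
    also have "Op s res hd (pchains P n) hd (pchains P n) (Rk A n) c = 0"
      by (rule RkF[OF c])
    also have "S_d P res (Suc n) (phiF (Suc n) b) = phiF n (psiF n c)"
      using phi_chainF[OF b(1)] b(2) by simp
    finally have "S_d P res (Suc n) x = c" by (simp only: diff_zero diff_add_cancel)
    then show "c \<in> boundaries (S_car P F) (S_d P res) n"
      using xS unfolding boundaries_def by (metis image_eqI)
  qed
  show ?thesis unfolding homology_iso_def using L C1 C2 C3 C4 by blast
qed

end

theorem theorem4:
  fixes A :: "'a::linorder set"
    and s :: "'r::comm_ring_1 \<Rightarrow> 'm::ab_group_add \<Rightarrow> 'm"
    and F :: "'a set \<Rightarrow> 'm set"
    and res :: "'a set \<Rightarrow> 'a set \<Rightarrow> 'm \<Rightarrow> 'm"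
  assumes "finite A"
    and "module s"
    and "is_sheaf s (Pow A) F res"
  shows "\<forall>n. homology_iso s
           (S_car (Pow A - {{}}) F) (S_d (Pow A - {{}}) res)
           (C_car A F) (C_d A res) n"
proof -
  have "shf A s F res" unfolding shf_def shf_axioms_def finA_def using assms by simp
  then interpret shf A s F res .
  show ?thesis using main_n by blast
qed

end
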